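(* Let $G$ be a distribution function on $\mathbb R$ whose support is $\mathbb J=\bigcup_{\alpha=1}^m[a_\alpha,b_\alpha]$, a union of pairwise disjoint intervals, such that $G$ has a bounded absolutely continuous density $g$ with $g(x)\sim|x-c|^{1/2}$ near each endpoint $c$ of the support. Let $F$ be any distribution function. Let $v>0$ and $0<\varepsilon<\frac12$ with $\varepsilon<\frac12\min_\alpha(b_\alpha-a_\alpha)$ and $2(\sqrt2+1)v\le\varepsilon^{3/2}$, and let $V>v$. For $x\in\mathbb J'_\varepsilon$ put $v'=v/\sqrt{\gamma(x)}$. Then $$\sup_x|F(x)-G(x)|\le 2\int_{-\infty}^\infty|S_F(u+iV)-S_G(u+iV)|\,du+C_1v+C_2\varepsilon^{3/2}+2\sup_{x\in\mathbb J'_\varepsilon}\int_{v'}^V|S_F(x+iu)-S_G(x+iu)|\,du,$$ where $C_1,C_2>0$ are absolute constants.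
   Context: For $x\in\mathbb J$, $\gamma(x)=\min_\alpha\{|x-a_\alpha|,|b_\alpha-x|\}$. For $\varepsilon>0$, $\mathbb J_\alpha^{(\varepsilon)}=\{x\in[a_\alpha,b_\alpha]:\gamma(x)\ge\varepsilon\}$ and $\mathbb J'_\varepsilon=\bigcup_{\alpha=1}^m\mathbb J_\alpha^{(\varepsilon/2)}$. For a distribution function $F$, $S_F(z)=\int_{-\infty}^\infty\frac{1}{x-z}\,dF(x)$ is its Stieltjes transform ($\operatorname{Im}z>0$). *)

theory Defs
  imports "HOL-Probability.Probability"
begin

definition measure_support :: "real measure \<Rightarrow> real set" where
  "measure_support M = {x. \<forall>e>0. 0 < measure M (ball x e)}"

definition stieltjes :: "real measure \<Rightarrow> complex \<Rightarrow> complex" where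
  "stieltjes M z = (LINT x|M. 1 / (complex_of_real x - z))"

definition abs_cont_on :: "real set \<Rightarrow> (real \<Rightarrow> real) \<Rightarrow> bool" where
  "abs_cont_on S f \<longleftrightarrow> (\<forall>e>0. \<exists>d>0. \<forall>n::nat. \<forall>s t :: nat \<Rightarrow> real.
     (\<forall>i<n. s i \<le> t i \<and> {s i..t i} \<subseteq> S) \<and>
     (\<forall>i<n. \<forall>j<n. i \<noteq> j \<longrightarrow> t i \<le> s j \<or> t j \<le> s i) \<and>
     (\<Sum>i<n. t i - s i) < d \<longrightarrow> (\<Sum>i<n. \<bar>f (t i) - f (s i)\<bar>) < e)"

text \<open>Intervals indexed by alpha < m (i.e. \<alpha> = 1..m in the paper).\<close>
definition suppJ :: "nat \<Rightarrow> (nat \<Rightarrow> real) \<Rightarrow> (nat \<Rightarrow> real) \<Rightarrow> real set" where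
  "suppJ m a b = (\<Union>\<alpha><m. {a \<alpha>..b \<alpha>})"

definition gam :: "nat \<Rightarrow> (nat \<Rightarrow> real) \<Rightarrow> (nat \<Rightarrow> real) \<Rightarrow> real \<Rightarrow> real" where
  "gam m a b x = Min ((\<lambda>\<alpha>. min \<bar>x - a \<alpha>\<bar> \<bar>b \<alpha> - x\<bar>) ` {..<m})"

definition Jeps :: "nat \<Rightarrow> (nat \<Rightarrow> real) \<Rightarrow> (nat \<Rightarrow> real) \<Rightarrow> nat \<Rightarrow> real \<Rightarrow> real set" where
  "Jeps m a b \<alpha> e = {x \<in> {a \<alpha>..b \<alpha>}. gam m a b x \<ge> e}"

definition Jprime :: "nat \<Rightarrow> (nat \<Rightarrow> real) \<Rightarrow> (nat \<Rightarrow> real) \<Rightarrow> real \<Rightarrow> real set" where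
  "Jprime m a b e = (\<Union>\<alpha><m. Jeps m a b \<alpha> (e / 2))"

end

theory Submission
  imports Defs
begin
definition cden :: "real \<Rightarrow> real \<Rightarrow> real" where
  "cden y s = y / (pi * (s\<^sup>2 + y\<^sup>2))"
definition Phi :: "real \<Rightarrow> real \<Rightarrow> real" where
  "Phi y r = 1/2 + arctan (r / y) / pi"

lemma sq_add_pos: "0 < (y::real) \<Longrightarrow> 0 < s\<^sup>2 + y\<^sup>2"
  by (simp add: add_nonneg_pos)

lemma cden_pos: "0 < y \<Longrightarrow> 0 < cden y s"
  unfolding cden_def by (intro divide_pos_pos mult_pos_pos) (auto simp: sq_add_pos)

lemma cden_nonneg: "0 < y \<Longrightarrow> 0 \<le> cden y s"
  using cden_pos[of y s] by simp

lemma cden_minus: "cden y (- s) = cden y s"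
  unfolding cden_def by simp

lemma cden_meas[measurable]: "(\<lambda>s. cden y s) \<in> borel_measurable borel"
  unfolding cden_def by measurable

lemma cden_cont: "0 < y \<Longrightarrow> isCont (cden y) s"
  unfolding cden_def
  by (intro continuous_intros) (auto simp: sq_add_pos)

lemma cden_le: "0 < y \<Longrightarrow> cden y s \<le> 1 / (pi * y)"
proof -
  assume y: "0 < y"
  have "y / (pi * (s\<^sup>2 + y\<^sup>2)) \<le> y / (pi * y\<^sup>2)"
    using y by (intro divide_left_mono mult_left_mono) (auto simp: sq_add_pos)
  also have "\<dots> = 1 / (pi * y)" using y by (simp add: power2_eq_square)
  finally show ?thesis unfolding cden_def .
qed

lemma deriv_arct: "0 < y \<Longrightarrow> ((\<lambda>s. arctan (s / y) / pi) has_real_derivative cden y s) (at s)"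
proof -
  assume y: "0 < y"
  have "((\<lambda>s. arctan (s / y) / pi) has_real_derivative (inverse (1 + (s/y)\<^sup>2) * (1/y)) / pi) (at s)"
    using y by (auto intro!: derivative_eq_intros)
  moreover have "(inverse (1 + (s/y)\<^sup>2) * (1/y)) / pi = cden y s"
    using y unfolding cden_def by (simp add: field_simps power2_eq_square)
  ultimately show ?thesis by simp
qed

lemma cden_atLeast: assumes y: "0 < y"
  shows "(\<integral>\<^sup>+ s. ennreal (cden y s) * indicator {r..} s \<partial>lborel) = ennreal (1/2 - arctan (r / y) / pi)"
proof -
  have l1: "LIM s at_top. s / y :> at_top"
    unfolding divide_inverse
    by (rule filterlim_at_top_mult_tendsto_pos[OF tendsto_const]) (use y in \<open>auto simp: filterlim_ident\<close>)
  have lim: "((\<lambda>s. arctan (s / y) / pi) \<longlongrightarrow> (pi/2)/pi) at_top"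
    by (intro tendsto_divide tendsto_const filterlim_compose[OF tendsto_arctan_at_top l1]) auto
  have "(\<integral>\<^sup>+ s. ennreal (cden y s) * indicator {r..} s \<partial>lborel) = (pi/2)/pi - arctan (r / y) / pi"
    by (rule nn_integral_FTC_atLeast[OF cden_meas deriv_arct[OF y] cden_nonneg[OF y] lim])
  then show ?thesis by simp
qed

lemma nn_reflect: fixes f :: "real \<Rightarrow> ennreal" assumes [measurable]: "f \<in> borel_measurable borel"
  shows "(\<integral>\<^sup>+ s. f s \<partial>lborel) = (\<integral>\<^sup>+ s. f (- s) \<partial>lborel)"
  using nn_integral_real_affine[of f "-1" 0] by simp

lemma nn_shift: fixes f :: "real \<Rightarrow> ennreal" assumes [measurable]: "f \<in> borel_measurable borel"
  shows "(\<integral>\<^sup>+ s. f s \<partial>lborel) = (\<integral>\<^sup>+ s. f (t + s) \<partial>lborel)"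
  using nn_integral_real_affine[of f 1 t] by simp

lemma cden_atMost: assumes y: "0 < y"
  shows "(\<integral>\<^sup>+ s. ennreal (cden y s) * indicator {..r} s \<partial>lborel) = ennreal (Phi y r)"
proof -
  have "(\<integral>\<^sup>+ s. ennreal (cden y s) * indicator {..r} s \<partial>lborel)
      = (\<integral>\<^sup>+ s. ennreal (cden y (- s)) * indicator {..r} (- s) \<partial>lborel)"
    by (rule nn_reflect) measurable
  also have "\<dots> = (\<integral>\<^sup>+ s. ennreal (cden y s) * indicator {-r..} s \<partial>lborel)"
    by (intro nn_integral_cong) (auto simp: cden_minus split: split_indicator)
  also have "\<dots> = ennreal (Phi y r)"
    unfolding cden_atLeast[OF y] Phi_def by (simp add: arctan_minus)
  finally show ?thesis .
qed

lemma cden_total: assumes y: "0 < y"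
  shows "(\<integral>\<^sup>+ s. ennreal (cden y s) \<partial>lborel) = 1"
proof -
  have "(\<integral>\<^sup>+ s. ennreal (cden y s) \<partial>lborel)
     = (\<integral>\<^sup>+ s. ennreal (cden y s) * indicator {..0} s + ennreal (cden y s) * indicator {0..} s \<partial>lborel)"
    by (intro nn_integral_cong_AE) (use AE_lborel_singleton[of 0] in eventually_elim, auto split: split_indicator)
  also have "\<dots> = ennreal (Phi y 0) + ennreal (1/2 - arctan (0 / y) / pi)"
    by (subst nn_integral_add) (auto simp: cden_atMost[OF y] cden_atLeast[OF y])
  also have "\<dots> = ennreal (1/2) + ennreal (1/2)" unfolding Phi_def by simp
  also have "\<dots> = ennreal (1/2 + 1/2)" by (rule ennreal_plus[symmetric]) auto
  also have "\<dots> = 1" by simp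
  finally show ?thesis .
qed

lemma cden_integrable: "0 < y \<Longrightarrow> integrable lborel (cden y)"
  by (intro integrableI_nonneg) (auto simp: cden_total cden_nonneg)

lemma cden_integral: "0 < y \<Longrightarrow> integral\<^sup>L lborel (cden y) = 1"
  using cden_total[of y] by (subst integral_eq_nn_integral) (auto simp: cden_nonneg)

lemma cden_out: assumes y: "0 < y"
  shows "(\<integral>\<^sup>+ s. ennreal (cden y s) * indicator (- {- (sqrt 3 * y)..sqrt 3 * y}) s \<partial>lborel) \<le> ennreal (1/3)"
proof -
  have at: "arctan (sqrt 3) = pi / 3"
    using arctan_tan[of "pi/3"] tan_60 by simp
  have "(\<integral>\<^sup>+ s. ennreal (cden y s) * indicator (- {- (sqrt 3 * y)..sqrt 3 * y}) s \<partial>lborel)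
     \<le> (\<integral>\<^sup>+ s. ennreal (cden y s) * indicator {..- (sqrt 3 * y)} s + ennreal (cden y s) * indicator {sqrt 3 * y..} s \<partial>lborel)"
    by (intro nn_integral_mono) (auto split: split_indicator)
  also have "\<dots> = ennreal (Phi y (- (sqrt 3 * y))) + ennreal (1/2 - arctan (sqrt 3 * y / y) / pi)"
    by (subst nn_integral_add) (auto simp: cden_atMost[OF y] cden_atLeast[OF y])
  also have "\<dots> = ennreal (1/3)"
    unfolding Phi_def using y by (simp add: arctan_minus at flip: ennreal_plus)
  finally show ?thesis .
qed


lemma bai_low:
  assumes y: "0 < y" and wm[measurable]: "w \<in> borel_measurable borel"
    and wD: "\<And>s. \<bar>w s\<bar> \<le> D" and wL: "\<And>s. \<bar>s\<bar> \<le> sqrt 3 * y \<Longrightarrow> L \<le> w s"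
    and LD: "0 \<le> L + D"
  shows "L - (L + D) / 3 \<le> (\<integral>s. cden y s * w s \<partial>lborel)"
proof -
  let ?out = "indicator (- {- (sqrt 3 * y)..sqrt 3 * y}) :: real \<Rightarrow> real"
  have ci: "integrable lborel (cden y)" by (rule cden_integrable[OF y])
  have i1: "integrable lborel (\<lambda>s. cden y s * w s)"
    by (rule Bochner_Integration.integrable_bound[OF integrable_mult_right[OF ci, of D]])
       (auto simp: abs_mult cden_nonneg[OF y] intro!: AE_I2,
        simp add: mult.commute[of "\<bar>D\<bar>"] cden_nonneg[OF y] mult_left_mono order_trans[OF wD])
  have i2: "integrable lborel (\<lambda>s. cden y s * ?out s)"
    by (rule Bochner_Integration.integrable_bound[OF ci]) (auto simp: cden_nonneg[OF y] split: split_indicator)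
  have "(\<integral>s. L * cden y s - (L + D) * (cden y s * ?out s) \<partial>lborel) \<le> (\<integral>s. cden y s * w s \<partial>lborel)"
  proof (rule integral_mono)
    show "integrable lborel (\<lambda>s. L * cden y s - (L + D) * (cden y s * ?out s))"
      using ci i2 by auto
    show "integrable lborel (\<lambda>s. cden y s * w s)" by (rule i1)
    fix s
    show "L * cden y s - (L + D) * (cden y s * ?out s) \<le> cden y s * w s"
    proof (cases "\<bar>s\<bar> \<le> sqrt 3 * y")
      case True
      then have "?out s = 0" by (auto split: split_indicator)
      then show ?thesis using wL[OF True] cden_nonneg[OF y, of s]
        by (simp add: mult.commute mult_right_mono)
    next
      case False
      then have "?out s = 1" by (auto split: split_indicator)
      moreover have "- D \<le> w s" using wD[of s] by simp
      moreover have "cden y s * (- D) \<le> cden y s * w s"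
        by (rule mult_left_mono[OF \<open>- D \<le> w s\<close> cden_nonneg[OF y]])
      ultimately show ?thesis by (simp add: algebra_simps)
    qed
  qed
  moreover have "(\<integral>s. L * cden y s - (L + D) * (cden y s * ?out s) \<partial>lborel)
      = L - (L + D) * (\<integral>s. cden y s * ?out s \<partial>lborel)"
    using ci i2 cden_integral[OF y] by simp
  moreover have "(\<integral>s. cden y s * ?out s \<partial>lborel) \<le> 1/3"
  proof -
    have "(\<integral>s. cden y s * ?out s \<partial>lborel) = enn2real (\<integral>\<^sup>+ s. ennreal (cden y s * ?out s) \<partial>lborel)"
      by (rule integral_eq_nn_integral) (auto simp: cden_nonneg[OF y])
    also have "(\<integral>\<^sup>+ s. ennreal (cden y s * ?out s) \<partial>lborel)
        = (\<integral>\<^sup>+ s. ennreal (cden y s) * indicator (- {- (sqrt 3 * y)..sqrt 3 * y}) s \<partial>lborel)"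
      by (intro nn_integral_cong) (auto split: split_indicator)
    also have "enn2real (\<integral>\<^sup>+ s. ennreal (cden y s) * indicator (- {- (sqrt 3 * y)..sqrt 3 * y}) s \<partial>lborel) \<le> enn2real (ennreal (1/3))"
      by (rule enn2real_mono[OF cden_out[OF y]]) simp
    finally show ?thesis by simp
  qed
  ultimately show ?thesis using LD mult_left_mono[of "(\<integral>s. cden y s * ?out s \<partial>lborel)" "1/3" "L + D"]
    by linarith
qed

lemma stj_integrable:
  assumes M: "real_distribution M" and z: "0 < Im z"
  shows "integrable M (\<lambda>t. 1 / (complex_of_real t - z))"
proof -
  interpret M: real_distribution M by fact
  show ?thesis
  proof (rule M.integrable_const_bound[where B="1 / Im z"])
    show "AE t in M. norm (1 / (complex_of_real t - z)) \<le> 1 / Im z"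
    proof (intro AE_I2)
      fix t
      have "Im z \<le> cmod (complex_of_real t - z)"
        using abs_Im_le_cmod[of "complex_of_real t - z"] by simp
      then show "norm (1 / (complex_of_real t - z)) \<le> 1 / Im z"
        using z by (simp add: norm_divide frac_le)
    qed
    show "(\<lambda>t. 1 / (complex_of_real t - z)) \<in> borel_measurable M"
      by (simp add: measurable_cong_sets[OF M.events_eq_borel refl]) measurable
  qed
qed

lemma Im_inv: "Im (1 / (complex_of_real t - Complex u V)) = V / ((t - u)\<^sup>2 + V\<^sup>2)"
  by (simp add: Im_divide power2_eq_square)

lemma Re_inv: "Re (1 / (complex_of_real t - Complex u V)) = (t - u) / ((t - u)\<^sup>2 + V\<^sup>2)"
  by (simp add: Re_divide power2_eq_square)

lemma Im_stj:
  assumes M: "real_distribution M" and V: "0 < V"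
  shows "Im (stieltjes M (Complex u V)) = pi * (\<integral>t. cden V (u - t) \<partial>M)"
proof -
  have "Im (stieltjes M (Complex u V)) = (\<integral>t. Im (1 / (complex_of_real t - Complex u V)) \<partial>M)"
    unfolding stieltjes_def using stj_integrable[OF M, of "Complex u V"] V by simp
  also have "\<dots> = (\<integral>t. pi * cden V (u - t) \<partial>M)"
    unfolding Im_inv cden_def by (intro Bochner_Integration.integral_cong) (auto simp: power2_commute)
  finally show ?thesis by simp
qed

lemma Re_stj:
  assumes M: "real_distribution M" and V: "0 < V"
  shows "Re (stieltjes M (Complex u V)) = (\<integral>t. (t - u) / ((t - u)\<^sup>2 + V\<^sup>2) \<partial>M)"
proof -
  have "Re (stieltjes M (Complex u V)) = (\<integral>t. Re (1 / (complex_of_real t - Complex u V)) \<partial>M)"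
    unfolding stieltjes_def using stj_integrable[OF M, of "Complex u V"] V by simp
  then show ?thesis unfolding Re_inv .
qed


lemma Phi_nonneg: "0 \<le> Phi y r"
  unfolding Phi_def using arctan_lbound[of "r / y"] by (simp add: field_simps)

lemma Phi_meas[measurable]: "(\<lambda>r. Phi y r) \<in> borel_measurable borel"
  unfolding Phi_def by measurable

lemma sets_pair1: "real_distribution M \<Longrightarrow> sets (M \<Otimes>\<^sub>M lborel) = sets (borel \<Otimes>\<^sub>M borel)"
  by (intro sets_pair_measure_cong) (auto simp: real_distribution.events_eq_borel)

lemma sets_pair2: "real_distribution M \<Longrightarrow> sets (lborel \<Otimes>\<^sub>M M) = sets (borel \<Otimes>\<^sub>M borel)"
  by (intro sets_pair_measure_cong) (auto simp: real_distribution.events_eq_borel)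

lemma pair_sf: "real_distribution M \<Longrightarrow> pair_sigma_finite M lborel"
  unfolding pair_sigma_finite_def
  using real_distribution.axioms(1) prob_space_imp_sigma_finite lborel.sigma_finite_measure_axioms by blast

lemma pair_sf2: "real_distribution M \<Longrightarrow> pair_sigma_finite lborel M"
  unfolding pair_sigma_finite_def
  using real_distribution.axioms(1) prob_space_imp_sigma_finite lborel.sigma_finite_measure_axioms by blast

lemma cdf_meas[measurable]: "real_distribution M \<Longrightarrow> cdf M \<in> borel_measurable borel"
proof -
  assume "real_distribution M"
  then interpret real_distribution M .
  show ?thesis by (rule borel_measurable_mono) (simp add: mono_def cdf_nondecreasing)
qed

lemma smooth_repr:
  assumes M: "real_distribution M" and y: "0 < y"
  shows "(\<integral>t. Phi y (x - t) \<partial>M) = (\<integral>s. cden y s * cdf M (x - s) \<partial>lborel)"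
proof -
  interpret M: real_distribution M by fact
  interpret P: pair_sigma_finite M lborel by (rule pair_sf[OF M])
  have cm[measurable]: "(\<lambda>s. cdf M (x - s)) \<in> borel_measurable borel"
    using cdf_meas[OF M] by measurable
  have fm: "(\<lambda>(t, s). if s + t \<le> x then ennreal (cden y s) else 0) \<in> borel_measurable (M \<Otimes>\<^sub>M lborel)"
    unfolding measurable_cong_sets[OF sets_pair1[OF M] refl] by measurable
  have "(\<integral>\<^sup>+ t. ennreal (Phi y (x - t)) \<partial>M)
      = (\<integral>\<^sup>+ t. (\<integral>\<^sup>+ s. (if s + t \<le> x then ennreal (cden y s) else 0) \<partial>lborel) \<partial>M)"
    by (intro nn_integral_cong) (auto simp: cden_atMost[OF y, symmetric] intro!: nn_integral_cong split: split_indicator)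
  also have "\<dots> = (\<integral>\<^sup>+ s. (\<integral>\<^sup>+ t. (if s + t \<le> x then ennreal (cden y s) else 0) \<partial>M) \<partial>lborel)"
    using P.Fubini'[OF fm] by simp
  also have "\<dots> = (\<integral>\<^sup>+ s. ennreal (cden y s) * emeasure M {..x - s} \<partial>lborel)"
  proof (intro nn_integral_cong)
    fix s
    have "(\<integral>\<^sup>+ t. (if s + t \<le> x then ennreal (cden y s) else 0) \<partial>M) = (\<integral>\<^sup>+ t. ennreal (cden y s) * indicator {..x - s} t \<partial>M)"
      by (intro nn_integral_cong) (auto split: split_indicator)
    also have "\<dots> = ennreal (cden y s) * emeasure M {..x - s}"
      by (subst nn_integral_cmult_indicator) auto
    finally show "(\<integral>\<^sup>+ t. (if s + t \<le> x then ennreal (cden y s) else 0) \<partial>M) = ennreal (cden y s) * emeasure M {..x - s}" .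
  qed
  also have "\<dots> = (\<integral>\<^sup>+ s. ennreal (cden y s * cdf M (x - s)) \<partial>lborel)"
    by (intro nn_integral_cong) (simp add: M.emeasure_eq_measure cdf_def ennreal_mult cden_nonneg[OF y])
  finally have eq: "(\<integral>\<^sup>+ t. ennreal (Phi y (x - t)) \<partial>M) = (\<integral>\<^sup>+ s. ennreal (cden y s * cdf M (x - s)) \<partial>lborel)" .
  have "(\<integral>t. Phi y (x - t) \<partial>M) = enn2real (\<integral>\<^sup>+ t. ennreal (Phi y (x - t)) \<partial>M)"
    by (rule integral_eq_nn_integral) (auto simp: Phi_nonneg)
  also have "\<dots> = enn2real (\<integral>\<^sup>+ s. ennreal (cden y s * cdf M (x - s)) \<partial>lborel)" by (simp add: eq)
  also have "\<dots> = (\<integral>s. cden y s * cdf M (x - s) \<partial>lborel)"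
    by (rule integral_eq_nn_integral[symmetric]) (auto simp: cden_nonneg[OF y] M.cdf_nonneg)
  finally show ?thesis .
qed


lemma stj_meas1[measurable]:
  assumes M: "real_distribution M"
  shows "(\<lambda>u. stieltjes M (Complex u V)) \<in> borel_measurable borel"
proof -
  interpret M: real_distribution M by fact
  have "(\<lambda>(u, t). 1 / (complex_of_real t - (of_real u + \<i> * of_real V))) \<in> borel_measurable (lborel \<Otimes>\<^sub>M M)"
    unfolding measurable_cong_sets[OF sets_pair2[OF M] refl] by measurable
  then have "(\<lambda>u. \<integral>t. 1 / (complex_of_real t - (of_real u + \<i> * of_real V)) \<partial>M) \<in> borel_measurable lborel"
    by (rule M.borel_measurable_lebesgue_integral[where f="\<lambda>u t. 1 / (complex_of_real t - (of_real u + \<i> * of_real V))"])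
  then show ?thesis unfolding stieltjes_def Complex_eq by simp
qed

lemma stj_meas2[measurable]:
  assumes M: "real_distribution M"
  shows "(\<lambda>u. stieltjes M (Complex x u)) \<in> borel_measurable borel"
proof -
  interpret M: real_distribution M by fact
  have "(\<lambda>(u, t). 1 / (complex_of_real t - (of_real x + \<i> * of_real u))) \<in> borel_measurable (lborel \<Otimes>\<^sub>M M)"
    unfolding measurable_cong_sets[OF sets_pair2[OF M] refl] by measurable
  then have "(\<lambda>u. \<integral>t. 1 / (complex_of_real t - (of_real x + \<i> * of_real u)) \<partial>M) \<in> borel_measurable lborel"
    by (rule M.borel_measurable_lebesgue_integral[where f="\<lambda>u t. 1 / (complex_of_real t - (of_real x + \<i> * of_real u))"])
  then show ?thesis unfolding stieltjes_def Complex_eq by simp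
qed

lemma stj_norm:
  assumes M: "real_distribution M" and z: "0 < Im z"
  shows "cmod (stieltjes M z) \<le> 1 / Im z"
proof -
  interpret M: real_distribution M by fact
  have "cmod (stieltjes M z) \<le> (\<integral>t. cmod (1 / (complex_of_real t - z)) \<partial>M)"
    unfolding stieltjes_def by (rule integral_norm_bound)
  also have "\<dots> \<le> 1 / Im z"
  proof (rule M.integral_le_const)
    show "integrable M (\<lambda>t. cmod (1 / (complex_of_real t - z)))"
      using stj_integrable[OF M z] by simp
    show "AE t in M. cmod (1 / (complex_of_real t - z)) \<le> 1 / Im z"
    proof (intro AE_I2)
      fix t
      have "Im z \<le> cmod (complex_of_real t - z)"
        using abs_Im_le_cmod[of "complex_of_real t - z"] by simp
      then show "cmod (1 / (complex_of_real t - z)) \<le> 1 / Im z"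
        using z by (simp add: norm_divide frac_le)
    qed
  qed
  finally show ?thesis .
qed

lemma Phi_le1: "Phi y r \<le> 1"
proof -
  have "arctan (r/y) / pi \<le> 1/2" using arctan_ubound[of "r/y"] pi_gt_zero by (simp add: divide_le_eq)
  then show ?thesis unfolding Phi_def by linarith
qed

lemma Phi_abs: "\<bar>Phi y r\<bar> \<le> 1"
  using Phi_le1[of y r] Phi_nonneg[of y r] by simp

lemma horiz:
  assumes M: "real_distribution M" and V: "0 < V"
  shows "integrable lborel (\<lambda>u. indicator {..x} u * (Im (stieltjes M (Complex u V)) / pi))"
    and "(\<integral>t. Phi V (x - t) \<partial>M) = (\<integral>u. indicator {..x} u * (Im (stieltjes M (Complex u V)) / pi) \<partial>lborel)"
proof -
  interpret M: real_distribution M by fact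
  interpret P: pair_sigma_finite M lborel by (rule pair_sf[OF M])
  have I: "Im (stieltjes M (Complex u V)) / pi = (\<integral>t. cden V (u - t) \<partial>M)" for u
    using Im_stj[OF M V] by simp
  have ci: "integrable M (\<lambda>t. cden V (u - t))" for u
    by (rule M.integrable_const_bound[where B="1/(pi*V)"]) (auto simp: cden_le[OF V] cden_nonneg[OF V])
  have fm: "(\<lambda>(t, u). if u \<le> x then ennreal (cden V (u - t)) else 0) \<in> borel_measurable (M \<Otimes>\<^sub>M lborel)"
    unfolding measurable_cong_sets[OF sets_pair1[OF M] refl] by measurable
  have gm: "(\<lambda>u. indicator {..x} u * (Im (stieltjes M (Complex u V)) / pi)) \<in> borel_measurable borel"
    using stj_meas1[OF M] by measurable
  have nn: "0 \<le> indicator {..x} u * (Im (stieltjes M (Complex u V)) / pi)" for u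
    unfolding I by (auto intro!: Bochner_Integration.integral_nonneg simp: cden_nonneg[OF V])
  have "(\<integral>\<^sup>+ t. ennreal (Phi V (x - t)) \<partial>M)
      = (\<integral>\<^sup>+ t. (\<integral>\<^sup>+ u. (if u \<le> x then ennreal (cden V (u - t)) else 0) \<partial>lborel) \<partial>M)"
  proof (intro nn_integral_cong)
    fix t
    have "ennreal (Phi V (x - t)) = (\<integral>\<^sup>+ s. ennreal (cden V s) * indicator {..x - t} s \<partial>lborel)"
      by (rule cden_atMost[OF V, symmetric])
    also have "\<dots> = (\<integral>\<^sup>+ s. ennreal (cden V (- t + s)) * indicator {..x - t} (- t + s) \<partial>lborel)"
      by (rule nn_shift) measurable
    also have "\<dots> = (\<integral>\<^sup>+ u. (if u \<le> x then ennreal (cden V (u - t)) else 0) \<partial>lborel)"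
      by (intro nn_integral_cong) (auto split: split_indicator)
    finally show "ennreal (Phi V (x - t)) = (\<integral>\<^sup>+ u. (if u \<le> x then ennreal (cden V (u - t)) else 0) \<partial>lborel)" .
  qed
  also have "\<dots> = (\<integral>\<^sup>+ u. (\<integral>\<^sup>+ t. (if u \<le> x then ennreal (cden V (u - t)) else 0) \<partial>M) \<partial>lborel)"
    using P.Fubini'[OF fm] by simp
  also have "\<dots> = (\<integral>\<^sup>+ u. ennreal (indicator {..x} u * (Im (stieltjes M (Complex u V)) / pi)) \<partial>lborel)"
  proof (intro nn_integral_cong)
    fix u
    show "(\<integral>\<^sup>+ t. (if u \<le> x then ennreal (cden V (u - t)) else 0) \<partial>M) = ennreal (indicator {..x} u * (Im (stieltjes M (Complex u V)) / pi))"
    proof (cases "u \<le> x")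
      case True
      then show ?thesis unfolding I
        using nn_integral_eq_integral[OF ci[of u]] by (simp add: cden_nonneg[OF V])
    qed simp
  qed
  finally have eq: "(\<integral>\<^sup>+ u. ennreal (indicator {..x} u * (Im (stieltjes M (Complex u V)) / pi)) \<partial>lborel) = ennreal (\<integral>t. Phi V (x - t) \<partial>M)"
    apply (subst (asm) nn_integral_eq_integral)
    subgoal by (rule M.integrable_const_bound[where B=1]) (auto simp: Phi_abs)
    by (auto simp: Phi_nonneg)
  show int: "integrable lborel (\<lambda>u. indicator {..x} u * (Im (stieltjes M (Complex u V)) / pi))"
    by (rule integrableI_nonneg) (use gm nn eq in auto)
  show "(\<integral>t. Phi V (x - t) \<partial>M) = (\<integral>u. indicator {..x} u * (Im (stieltjes M (Complex u V)) / pi) \<partial>lborel)"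
  proof -
    have i0: "0 \<le> (\<integral>t. Phi V (x - t) \<partial>M)" by (rule Bochner_Integration.integral_nonneg) (simp add: Phi_nonneg)
    have i1: "0 \<le> (\<integral>u. indicator {..x} u * (Im (stieltjes M (Complex u V)) / pi) \<partial>lborel)"
      by (rule Bochner_Integration.integral_nonneg) (rule nn)
    have "ennreal (\<integral>u. indicator {..x} u * (Im (stieltjes M (Complex u V)) / pi) \<partial>lborel) = ennreal (\<integral>t. Phi V (x - t) \<partial>M)"
      using eq nn_integral_eq_integral[OF int] nn by simp
    then show ?thesis using i0 i1 by simp
  qed
qed


lemma frac_bound:
  assumes u: "0 < (u::real)"
  shows "\<bar>a\<bar> / (a\<^sup>2 + u\<^sup>2) \<le> 1 / u"
proof -
  have "0 \<le> (\<bar>a\<bar> - u)\<^sup>2" by simp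
  then have h: "u * (\<bar>a\<bar> * 2) \<le> a * a + u * u"
    by (simp add: power2_eq_square algebra_simps abs_mult_self_eq)
  have "0 \<le> u * \<bar>a\<bar>" using u by simp
  with h have "\<bar>a\<bar> * u \<le> a\<^sup>2 + u\<^sup>2"
    by (simp add: power2_eq_square algebra_simps)
  moreover have "0 < a\<^sup>2 + u\<^sup>2" using u by (simp add: sq_add_pos)
  ultimately show ?thesis using u by (simp add: divide_le_eq field_simps)
qed

lemma arct_diff:
  assumes y: "0 < y" and yV: "y \<le> V"
  shows "Phi V r - Phi y r = (\<integral>u. (- (r / (r\<^sup>2 + u\<^sup>2))) * indicator {y..V} u \<partial>lborel) / pi"
proof -
  have d: "((\<lambda>u. arctan (r / u)) has_real_derivative (- (r / (r\<^sup>2 + u\<^sup>2)))) (at u)" if "y \<le> u" for u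
  proof -
    have u: "0 < u" using that y by simp
    then have "0 < r\<^sup>2 + u\<^sup>2" by (simp add: sq_add_pos)
    then show ?thesis using u
      by (auto intro!: derivative_eq_intros simp: field_simps power2_eq_square)
  qed
  have c: "isCont (\<lambda>u. - (r / (r\<^sup>2 + u\<^sup>2))) u" if "y \<le> u" for u
  proof -
    have "0 < r\<^sup>2 + u\<^sup>2" using that y by (simp add: sq_add_pos)
    then show ?thesis by (intro continuous_intros) auto
  qed
  have "(\<integral>u. (- (r / (r\<^sup>2 + u\<^sup>2))) * indicator {y..V} u \<partial>lborel) = arctan (r / V) - arctan (r / y)"
    by (rule integral_FTC_Icc_real[OF yV]) (auto intro: d c)
  then show ?thesis unfolding Phi_def by (simp add: diff_divide_distrib)
qed

lemma vert:
  assumes M: "real_distribution M" and y: "0 < y" and yV: "y \<le> V"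
  shows "(\<integral>t. Phi V (x - t) \<partial>M) - (\<integral>t. Phi y (x - t) \<partial>M)
      = (\<integral>u. indicator {y..V} u * Re (stieltjes M (Complex x u)) \<partial>lborel) / pi"
proof -
  interpret M: real_distribution M by fact
  interpret P: pair_sigma_finite M lborel by (rule pair_sf[OF M])
  define k where "k t u = (t - x) / ((t - x)\<^sup>2 + u\<^sup>2) * indicator {y..V} u" for t u :: real
  have km[measurable]: "(\<lambda>(t, u). k t u) \<in> borel_measurable (M \<Otimes>\<^sub>M lborel)"
    unfolding measurable_cong_sets[OF sets_pair1[OF M] refl] k_def by measurable
  have kint: "integrable lborel (k t)" for t
  proof -
    have "continuous_on {y..V} (\<lambda>u. (t - x) / ((t - x)\<^sup>2 + u\<^sup>2))"
      using y by (intro continuous_intros) (auto simp: sq_add_pos)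
    from borel_integrable_atLeastAtMost'[OF this]
    show ?thesis unfolding set_integrable_def k_def by (simp add: mult.commute)
  qed
  have kb: "\<bar>k t u\<bar> \<le> (1 / y) * indicator {y..V} u" for t u
  proof (cases "u \<in> {y..V}")
    case True
    then have u: "0 < u" "y \<le> u" using y by auto
    have "\<bar>t - x\<bar> / ((t - x)\<^sup>2 + u\<^sup>2) \<le> 1 / u" by (rule frac_bound[OF u(1)])
    also have "\<dots> \<le> 1 / y" using u y by (simp add: frac_le)
    finally show ?thesis using True by (simp add: k_def abs_divide)
  qed (simp add: k_def)
  have pair_int: "integrable (M \<Otimes>\<^sub>M lborel) (\<lambda>(t, u). k t u)"
  proof (rule P.Fubini_integrable)
    show "(\<lambda>(t, u). k t u) \<in> borel_measurable (M \<Otimes>\<^sub>M lborel)" by (rule km)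
    show "AE t in M. integrable lborel (\<lambda>u. case (t, u) of (t, u) \<Rightarrow> k t u)"
      using kint by simp
    have "(\<lambda>t. \<integral>u. norm (k t u) \<partial>lborel) \<in> borel_measurable M"
      by (rule lborel.borel_measurable_lebesgue_integral[where f="\<lambda>t u. norm (k t u)"]) (use km in simp)
    then show "integrable M (\<lambda>t. \<integral>u. norm (case (t, u) of (t, u) \<Rightarrow> k t u) \<partial>lborel)"
    proof (intro M.integrable_const_bound[where B="(V - y) / y"] AE_I2)
      fix t
      have "(\<integral>u. norm (k t u) \<partial>lborel) \<le> (\<integral>u. (1 / y) * indicator {y..V} u \<partial>lborel)"
        by (intro integral_mono) (use kint kb in \<open>auto intro!: integrable_divide integrable_real_indicator simp: emeasure_lborel_Icc_eq\<close>)
      also have "\<dots> = (V - y) / y" using yV by simp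
      finally show "norm (\<integral>u. norm (case (t, u) of (t, u) \<Rightarrow> k t u) \<partial>lborel) \<le> (V - y) / y"
        by simp
    qed simp
  qed
  have inner: "(\<integral>t. k t u \<partial>M) = indicator {y..V} u * Re (stieltjes M (Complex x u))" for u
  proof (cases "u \<in> {y..V}")
    case True
    then have u: "0 < u" using y by auto
    show ?thesis using True unfolding k_def Re_stj[OF M u] by simp
  qed (simp add: k_def)
  have pt: "Phi V (x - t) - Phi y (x - t) = (\<integral>u. k t u \<partial>lborel) / pi" for t
  proof -
    have "(\<integral>u. (- ((x - t) / ((x - t)\<^sup>2 + u\<^sup>2))) * indicator {y..V} u \<partial>lborel) = (\<integral>u. k t u \<partial>lborel)"
      by (intro Bochner_Integration.integral_cong refl) (simp add: k_def power2_commute[of x t] minus_divide_left)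
    then show ?thesis unfolding arct_diff[OF y yV] by simp
  qed
  have iP: "integrable M (\<lambda>t. Phi z (x - t))" for z
    by (rule M.integrable_const_bound[where B=1]) (auto simp: Phi_abs)
  have "(\<integral>t. Phi V (x - t) \<partial>M) - (\<integral>t. Phi y (x - t) \<partial>M) = (\<integral>t. Phi V (x - t) - Phi y (x - t) \<partial>M)"
    using iP by simp
  also have "\<dots> = (\<integral>t. (\<integral>u. k t u \<partial>lborel) \<partial>M) / pi"
    unfolding pt by simp
  also have "(\<integral>t. (\<integral>u. k t u \<partial>lborel) \<partial>M) = (\<integral>u. (\<integral>t. k t u \<partial>M) \<partial>lborel)"
    using P.Fubini_integral[OF pair_int] by simp
  also have "\<dots> = (\<integral>u. indicator {y..V} u * Re (stieltjes M (Complex x u)) \<partial>lborel)"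
    unfolding inner ..
  finally show ?thesis .
qed


lemma enn_pt: "\<bar>r\<bar> \<le> c / pi \<Longrightarrow> 0 \<le> c \<Longrightarrow> ennreal (norm r) \<le> ennreal (1 / pi) * ennreal c"
  by (subst ennreal_mult[symmetric]) (auto intro!: ennreal_leI)

lemma PD_bound:
  assumes M: "real_distribution M" and N: "real_distribution N" and y: "0 < y" and yV: "y \<le> V"
  shows "ennreal \<bar>(\<integral>t. Phi y (x - t) \<partial>M) - (\<integral>t. Phi y (x - t) \<partial>N)\<bar>
    \<le> ennreal (1 / pi) * ((\<integral>\<^sup>+ u. ennreal (cmod (stieltjes M (Complex u V) - stieltjes N (Complex u V))) \<partial>lborel)
       + (\<integral>\<^sup>+ u. ennreal (cmod (stieltjes M (Complex x u) - stieltjes N (Complex x u))) * indicator {y..V} u \<partial>lborel))"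
proof -
  have V: "0 < V" using y yV by simp
  define hM where "hM u = indicator {..x} u * (Im (stieltjes M (Complex u V)) / pi)" for u
  define hN where "hN u = indicator {..x} u * (Im (stieltjes N (Complex u V)) / pi)" for u
  define vM where "vM u = indicator {y..V} u * Re (stieltjes M (Complex x u))" for u
  define vN where "vN u = indicator {y..V} u * Re (stieltjes N (Complex x u))" for u
  have ihM: "integrable lborel hM" unfolding hM_def by (rule horiz(1)[OF M V])
  have ihN: "integrable lborel hN" unfolding hN_def by (rule horiz(1)[OF N V])
  have vint: "integrable lborel (\<lambda>u. indicator {y..V} u * Re (stieltjes K (Complex x u)))"
    if K: "real_distribution K" for K
  proof (rule Bochner_Integration.integrable_bound)
    show "integrable lborel (\<lambda>u. indicator {y..V} u / y :: real)"
      by (auto intro!: integrable_divide integrable_real_indicator simp: emeasure_lborel_Icc_eq)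
    show "(\<lambda>u. indicator {y..V} u * Re (stieltjes K (Complex x u))) \<in> borel_measurable lborel"
      using stj_meas2[OF K] by measurable
    show "AE u in lborel. norm (indicator {y..V} u * Re (stieltjes K (Complex x u))) \<le> norm (indicator {y..V} u / y :: real)"
    proof (intro AE_I2)
      fix u
      show "norm (indicator {y..V} u * Re (stieltjes K (Complex x u))) \<le> norm (indicator {y..V} u / y :: real)"
      proof (cases "u \<in> {y..V}")
        case True
        then have u: "0 < u" "y \<le> u" using y by auto
        have "\<bar>Re (stieltjes K (Complex x u))\<bar> \<le> cmod (stieltjes K (Complex x u))" by (rule abs_Re_le_cmod)
        also have "\<dots> \<le> 1 / u" using stj_norm[OF K, of "Complex x u"] u by simp
        also have "\<dots> \<le> 1 / y" using u y by (simp add: frac_le)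
        finally show ?thesis using True y by simp
      qed simp
    qed
  qed
  have ivM: "integrable lborel vM" unfolding vM_def by (rule vint[OF M])
  have ivN: "integrable lborel vN" unfolding vN_def by (rule vint[OF N])
  define A0 where "A0 = (\<integral>t. Phi V (x - t) \<partial>M) - (\<integral>t. Phi V (x - t) \<partial>N)"
  define B0 where "B0 = ((\<integral>t. Phi V (x - t) \<partial>M) - (\<integral>t. Phi y (x - t) \<partial>M)) - ((\<integral>t. Phi V (x - t) \<partial>N) - (\<integral>t. Phi y (x - t) \<partial>N))"
  have A0: "A0 = (\<integral>u. hM u - hN u \<partial>lborel)"
    unfolding A0_def horiz(2)[OF M V] horiz(2)[OF N V] hM_def[symmetric] hN_def[symmetric]
    using ihM ihN by simp
  have B0: "B0 = (\<integral>u. (vM u - vN u) / pi \<partial>lborel)"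
    unfolding B0_def vert[OF M y yV] vert[OF N y yV] vM_def[symmetric] vN_def[symmetric]
    using ivM ivN by (simp add: diff_divide_distrib)
  have "ennreal \<bar>A0\<bar> \<le> (\<integral>\<^sup>+ u. ennreal (norm (hM u - hN u)) \<partial>lborel)"
    unfolding A0 using integral_norm_bound_ennreal[of lborel "\<lambda>u. hM u - hN u"] ihM ihN by simp
  also have "\<dots> \<le> (\<integral>\<^sup>+ u. ennreal (1 / pi) * ennreal (cmod (stieltjes M (Complex u V) - stieltjes N (Complex u V))) \<partial>lborel)"
  proof (intro nn_integral_mono enn_pt)
    fix u
    have "\<bar>hM u - hN u\<bar> = indicator {..x} u * \<bar>Im (stieltjes M (Complex u V) - stieltjes N (Complex u V))\<bar> / pi"
      unfolding hM_def hN_def by (auto split: split_indicator simp: diff_divide_distrib[symmetric] abs_divide)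
    also have "\<dots> \<le> cmod (stieltjes M (Complex u V) - stieltjes N (Complex u V)) / pi"
      using abs_Im_le_cmod[of "stieltjes M (Complex u V) - stieltjes N (Complex u V)"]
      by (auto split: split_indicator intro!: divide_right_mono)
    finally show "\<bar>hM u - hN u\<bar> \<le> cmod (stieltjes M (Complex u V) - stieltjes N (Complex u V)) / pi" .
  qed simp
  also have "\<dots> = ennreal (1 / pi) * (\<integral>\<^sup>+ u. ennreal (cmod (stieltjes M (Complex u V) - stieltjes N (Complex u V))) \<partial>lborel)"
    by (rule nn_integral_cmult) (use stj_meas1[OF M] stj_meas1[OF N] in measurable)
  finally have eA: "ennreal \<bar>A0\<bar> \<le> ennreal (1 / pi) * (\<integral>\<^sup>+ u. ennreal (cmod (stieltjes M (Complex u V) - stieltjes N (Complex u V))) \<partial>lborel)" .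
  have "ennreal \<bar>B0\<bar> \<le> (\<integral>\<^sup>+ u. ennreal (norm ((vM u - vN u) / pi)) \<partial>lborel)"
    unfolding B0 using integral_norm_bound_ennreal[of lborel "\<lambda>u. (vM u - vN u) / pi"] ivM ivN by simp
  also have "\<dots> \<le> (\<integral>\<^sup>+ u. ennreal (1 / pi) * ennreal (cmod (stieltjes M (Complex x u) - stieltjes N (Complex x u)) * indicator {y..V} u) \<partial>lborel)"
  proof (intro nn_integral_mono enn_pt)
    fix u
    have "\<bar>(vM u - vN u) / pi\<bar> = indicator {y..V} u * \<bar>Re (stieltjes M (Complex x u) - stieltjes N (Complex x u))\<bar> / pi"
      unfolding vM_def vN_def by (auto split: split_indicator simp: abs_divide)
    also have "\<dots> \<le> cmod (stieltjes M (Complex x u) - stieltjes N (Complex x u)) * indicator {y..V} u / pi"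
      using abs_Re_le_cmod[of "stieltjes M (Complex x u) - stieltjes N (Complex x u)"]
      by (auto split: split_indicator intro!: divide_right_mono)
    finally show "\<bar>(vM u - vN u) / pi\<bar> \<le> cmod (stieltjes M (Complex x u) - stieltjes N (Complex x u)) * indicator {y..V} u / pi" .
  qed simp
  also have "\<dots> = ennreal (1 / pi) * (\<integral>\<^sup>+ u. ennreal (cmod (stieltjes M (Complex x u) - stieltjes N (Complex x u))) * indicator {y..V} u \<partial>lborel)"
    apply (subst nn_integral_cmult[symmetric])
     apply (use stj_meas2[OF M] stj_meas2[OF N] in measurable)
    by (intro nn_integral_cong) (simp add: ennreal_mult' split: split_indicator)
  finally have eB: "ennreal \<bar>B0\<bar> \<le> ennreal (1 / pi) * (\<integral>\<^sup>+ u. ennreal (cmod (stieltjes M (Complex x u) - stieltjes N (Complex x u))) * indicator {y..V} u \<partial>lborel)" .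
  have "(\<integral>t. Phi y (x - t) \<partial>M) - (\<integral>t. Phi y (x - t) \<partial>N) = A0 - B0"
    unfolding A0_def B0_def by simp
  then have "ennreal \<bar>(\<integral>t. Phi y (x - t) \<partial>M) - (\<integral>t. Phi y (x - t) \<partial>N)\<bar> \<le> ennreal \<bar>A0\<bar> + ennreal \<bar>B0\<bar>"
    by (simp add: ennreal_plus[symmetric] del: ennreal_plus)
  also have "\<dots> \<le> ennreal (1 / pi) * (\<integral>\<^sup>+ u. ennreal (cmod (stieltjes M (Complex u V) - stieltjes N (Complex u V))) \<partial>lborel)
      + ennreal (1 / pi) * (\<integral>\<^sup>+ u. ennreal (cmod (stieltjes M (Complex x u) - stieltjes N (Complex x u))) * indicator {y..V} u \<partial>lborel)"
    by (rule add_mono[OF eA eB])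
  finally show ?thesis by (simp add: distrib_left)
qed



lemma gam_le: "\<alpha> < m \<Longrightarrow> gam m a b x \<le> min \<bar>x - a \<alpha>\<bar> \<bar>b \<alpha> - x\<bar>"
  unfolding gam_def by (rule Min_le) auto

lemma gam_ge: "0 < m \<Longrightarrow> (\<And>\<alpha>. \<alpha> < m \<Longrightarrow> r \<le> min \<bar>x - a \<alpha>\<bar> \<bar>b \<alpha> - x\<bar>) \<Longrightarrow> r \<le> gam m a b x"
  unfolding gam_def by (subst Min_ge_iff) auto

lemma gam_att: "0 < m \<Longrightarrow> \<exists>\<alpha><m. gam m a b x = min \<bar>x - a \<alpha>\<bar> \<bar>b \<alpha> - x\<bar>"
proof -
  assume m: "0 < m"
  have "gam m a b x \<in> (\<lambda>\<alpha>. min \<bar>x - a \<alpha>\<bar> \<bar>b \<alpha> - x\<bar>) ` {..<m}"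
    unfolding gam_def by (rule Min_in) (use m in auto)
  then show ?thesis by auto
qed

lemma gam_nonneg: "0 < m \<Longrightarrow> 0 \<le> gam m a b x"
  by (rule gam_ge) auto

lemma gam_lip: "0 < m \<Longrightarrow> gam m a b t \<le> gam m a b s + \<bar>t - s\<bar>"
proof -
  assume m: "0 < m"
  obtain \<alpha> where al: "\<alpha> < m" "gam m a b s = min \<bar>s - a \<alpha>\<bar> \<bar>b \<alpha> - s\<bar>" using gam_att[OF m] by blast
  have "gam m a b t \<le> min \<bar>t - a \<alpha>\<bar> \<bar>b \<alpha> - t\<bar>" by (rule gam_le[OF al(1)])
  also have "\<dots> \<le> min \<bar>s - a \<alpha>\<bar> \<bar>b \<alpha> - s\<bar> + \<bar>t - s\<bar>" by (simp add: min_def abs_if)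
  finally show ?thesis using al by simp
qed

locale GS =
  fixes N :: "real measure" and g :: "real \<Rightarrow> real" and m :: nat and a b :: "nat \<Rightarrow> real"
  assumes m_pos: "m > 0"
    and intervals: "\<forall>\<alpha><m. a \<alpha> < b \<alpha>"
    and disjoint: "\<forall>\<alpha><m. \<forall>\<beta><m. \<alpha> \<noteq> \<beta> \<longrightarrow> b \<alpha> < a \<beta> \<or> b \<beta> < a \<alpha>"
    and N_distr: "real_distribution N"
    and g_meas: "g \<in> borel_measurable borel"
    and g_nonneg: "\<forall>x. 0 \<le> g x"
    and N_density: "N = density lborel (\<lambda>x. ennreal (g x))"
    and g_bounded: "\<exists>K. \<forall>x. \<bar>g x\<bar> \<le> K"
    and g_ac: "abs_cont_on UNIV g"
    and support: "measure_support N = suppJ m a b"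
    and edges: "\<forall>\<alpha><m. \<forall>c\<in>{a \<alpha>, b \<alpha>}. \<exists>c1>0. \<exists>c2>0. \<exists>\<delta>>0.
        \<forall>x\<in>suppJ m a b. \<bar>x - c\<bar> < \<delta> \<longrightarrow>
          c1 * sqrt \<bar>x - c\<bar> \<le> g x \<and> g x \<le> c2 * sqrt \<bar>x - c\<bar>"
begin

abbreviation "J \<equiv> suppJ m a b"
abbreviation "gm \<equiv> gam m a b"

lemma g_cont: "isCont g x"
  unfolding isCont_def LIM_eq
proof (intro allI impI)
  fix r :: real assume r: "0 < r"
  obtain d where d: "d > 0" and hd: "\<forall>n::nat. \<forall>s t :: nat \<Rightarrow> real.
     (\<forall>i<n. s i \<le> t i \<and> {s i..t i} \<subseteq> UNIV) \<and>
     (\<forall>i<n. \<forall>j<n. i \<noteq> j \<longrightarrow> t i \<le> s j \<or> t j \<le> s i) \<and>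
     (\<Sum>i<n. t i - s i) < d \<longrightarrow> (\<Sum>i<n. \<bar>g (t i) - g (s i)\<bar>) < r"
    using g_ac r unfolding abs_cont_on_def by blast
  show "\<exists>s>0. \<forall>y. y \<noteq> x \<and> norm (y - x) < s \<longrightarrow> norm (g y - g x) < r"
  proof (intro exI[of _ d] conjI allI impI)
    fix y assume "y \<noteq> x \<and> norm (y - x) < d"
    then have yx: "\<bar>y - x\<bar> < d" by simp
    have "(\<Sum>i<(1::nat). \<bar>g ((\<lambda>_. max x y) i) - g ((\<lambda>_. min x y) i)\<bar>) < r"
      using hd[rule_format, where n=1 and s="\<lambda>_. min x y" and t="\<lambda>_. max x y"] yx by (auto simp: max_def min_def)
    then show "norm (g y - g x) < r" by (auto simp: max_def min_def abs_minus_commute split: if_splits)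
  qed (use d in auto)
qed

lemma sets_N[simp, measurable_cong]: "sets N = sets borel"
  using N_density by simp

lemma emeasure_N: "A \<in> sets borel \<Longrightarrow> emeasure N A = (\<integral>\<^sup>+ x. ennreal (g x) * indicator A x \<partial>lborel)"
  using N_density g_meas by (simp add: emeasure_density)

lemma g_zero_outside: assumes t: "t \<notin> J" shows "g t = 0"
proof (rule ccontr)
  assume "g t \<noteq> 0"
  then have gt: "0 < g t" using g_nonneg by (metis less_eq_real_def)
  interpret N: real_distribution N by (rule N_distr)
  obtain d where d: "d > 0" and hd: "\<forall>y. y \<noteq> t \<and> norm (y - t) < d \<longrightarrow> norm (g y - g t) < g t / 2"
    using g_cont[of t] gt unfolding isCont_def LIM_eq by (meson half_gt_zero)
  have "t \<in> measure_support N"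
    unfolding measure_support_def
  proof (intro CollectI allI impI)
    fix e :: real assume e: "0 < e"
    define r where "r = min e d / 2"
    have r: "0 < r" "r < e" "r < d" using e d by (auto simp: r_def)
    have sub: "{t - r..t + r} \<subseteq> ball t e" using r by (auto simp: dist_real_def)
    have "ennreal (g t / 2 * (2 * r)) = ennreal (g t / 2) * emeasure lborel {t - r..t + r}"
      using r gt by (simp add: emeasure_lborel_Icc_eq ennreal_mult[symmetric])
    also have "\<dots> = (\<integral>\<^sup>+ x. ennreal (g t / 2) * indicator {t - r..t + r} x \<partial>lborel)"
      by (rule nn_integral_cmult_indicator[symmetric]) simp
    also have "\<dots> \<le> (\<integral>\<^sup>+ x. ennreal (g x) * indicator (ball t e) x \<partial>lborel)"
    proof (intro nn_integral_mono)
      fix x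
      show "ennreal (g t / 2) * indicator {t - r..t + r} x \<le> ennreal (g x) * indicator (ball t e) x"
      proof (cases "x \<in> {t - r..t + r}")
        case True
        then have "x \<in> ball t e" using sub by auto
        moreover have "g t / 2 \<le> g x"
        proof (cases "x = t")
          case False
          then have "norm (g x - g t) < g t / 2" using hd True r by auto
          then show ?thesis by simp (smt (verit))
        qed (use gt in auto)
        ultimately show ?thesis using True by (auto intro: ennreal_leI)
      qed simp
    qed
    also have "\<dots> = emeasure N (ball t e)" by (simp add: emeasure_N)
    finally have "0 < emeasure N (ball t e)"
      using r gt by (metis ennreal_eq_0_iff mult_pos_pos not_gr_zero order.strict_iff_not
            zero_less_divide_iff zero_less_numeral nonzero_mult_div_cancel_left le_zero_eq)
    then show "0 < measure N (ball t e)" by (simp add: N.emeasure_eq_measure)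
  qed
  then show False using t support by simp
qed

lemma gam_in:
  assumes al: "\<alpha> < m" and x: "x \<in> {a \<alpha>..b \<alpha>}"
  shows "gm x = min (x - a \<alpha>) (b \<alpha> - x)"
proof (rule antisym)
  show "gm x \<le> min (x - a \<alpha>) (b \<alpha> - x)" using gam_le[OF al, of a b x] x by simp
  show "min (x - a \<alpha>) (b \<alpha> - x) \<le> gm x"
  proof (rule gam_ge[OF m_pos])
    fix \<beta> assume be: "\<beta> < m"
    show "min (x - a \<alpha>) (b \<alpha> - x) \<le> min \<bar>x - a \<beta>\<bar> \<bar>b \<beta> - x\<bar>"
    proof (cases "\<beta> = \<alpha>")
      case True then show ?thesis using x by simp
    next
      case False
      then have "b \<alpha> < a \<beta> \<or> b \<beta> < a \<alpha>" using disjoint al be by blast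
      moreover have "a \<beta> < b \<beta>" using intervals be by blast
      ultimately show ?thesis using x by (auto simp: min_def abs_if)
    qed
  qed
qed

lemma g_sqrt: "\<exists>C\<ge>0. \<forall>t. g t \<le> C * sqrt (gm t)"
proof -
  obtain K where K: "\<forall>x. \<bar>g x\<bar> \<le> K" using g_bounded by blast
  have K0: "0 \<le> K" using K[rule_format, of 0] by simp
  have one: "\<exists>C\<ge>0. \<forall>t\<in>J. g t \<le> C * sqrt \<bar>t - c\<bar>" if al: "\<alpha> < m" and c: "c \<in> {a \<alpha>, b \<alpha>}" for \<alpha> c
  proof -
    obtain c1 c2 \<delta> where c2: "c2 > 0" and dl: "\<delta> > 0" and h: "\<forall>x\<in>J. \<bar>x - c\<bar> < \<delta> \<longrightarrow>
          c1 * sqrt \<bar>x - c\<bar> \<le> g x \<and> g x \<le> c2 * sqrt \<bar>x - c\<bar>"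
      using edges al c by blast
    define C where "C = max c2 (K / sqrt \<delta>)"
    show ?thesis
    proof (intro exI[of _ C] conjI ballI)
      show "0 \<le> C" using c2 by (simp add: C_def)
      fix t assume t: "t \<in> J"
      show "g t \<le> C * sqrt \<bar>t - c\<bar>"
      proof (cases "\<bar>t - c\<bar> < \<delta>")
        case True
        then have "g t \<le> c2 * sqrt \<bar>t - c\<bar>" using h t by blast
        also have "\<dots> \<le> C * sqrt \<bar>t - c\<bar>" by (intro mult_right_mono) (auto simp: C_def)
        finally show ?thesis .
      next
        case False
        have sd: "0 < sqrt \<delta>" using dl by simp
        have "g t \<le> K" using K[rule_format, of t] by simp
        also have "\<dots> = (K / sqrt \<delta>) * sqrt \<delta>" using sd by simp
        also have "\<dots> \<le> (K / sqrt \<delta>) * sqrt \<bar>t - c\<bar>"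
          using False K0 sd by (intro mult_left_mono) auto
        also have "\<dots> \<le> C * sqrt \<bar>t - c\<bar>" by (intro mult_right_mono) (auto simp: C_def)
        finally show ?thesis .
      qed
    qed
  qed
  have "\<forall>\<alpha>. \<exists>C. \<alpha> < m \<longrightarrow> (C \<ge> 0 \<and> (\<forall>t\<in>J. g t \<le> C * sqrt \<bar>t - a \<alpha>\<bar>))"
    using one by blast
  then obtain CA where CA: "\<forall>\<alpha>. \<alpha> < m \<longrightarrow> (CA \<alpha> \<ge> 0 \<and> (\<forall>t\<in>J. g t \<le> CA \<alpha> * sqrt \<bar>t - a \<alpha>\<bar>))"
    by (metis choice)
  have "\<forall>\<alpha>. \<exists>C. \<alpha> < m \<longrightarrow> (C \<ge> 0 \<and> (\<forall>t\<in>J. g t \<le> C * sqrt \<bar>t - b \<alpha>\<bar>))"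
    using one by blast
  then obtain CB where CB: "\<forall>\<alpha>. \<alpha> < m \<longrightarrow> (CB \<alpha> \<ge> 0 \<and> (\<forall>t\<in>J. g t \<le> CB \<alpha> * sqrt \<bar>t - b \<alpha>\<bar>))"
    by (metis choice)
  define C where "C = (\<Sum>\<alpha><m. CA \<alpha> + CB \<alpha>)"
  have Cge: "CA \<alpha> \<le> C" "CB \<alpha> \<le> C" if "\<alpha> < m" for \<alpha>
  proof -
    have "CA \<alpha> + CB \<alpha> \<le> C" unfolding C_def
      by (rule member_le_sum[where f="\<lambda>\<alpha>. CA \<alpha> + CB \<alpha>"]) (use that CA CB in auto)
    then show "CA \<alpha> \<le> C" "CB \<alpha> \<le> C" using that CA CB by auto
  qed
  have C0: "0 \<le> C" unfolding C_def using CA CB by (auto intro: sum_nonneg add_nonneg_nonneg)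
  show ?thesis
  proof (intro exI[of _ C] conjI allI C0)
    fix t
    show "g t \<le> C * sqrt (gm t)"
    proof (cases "t \<in> J")
      case False
      then show ?thesis using g_zero_outside C0 gam_nonneg[OF m_pos] by simp
    next
      case True
      obtain \<alpha> where al: "\<alpha> < m" "gm t = min \<bar>t - a \<alpha>\<bar> \<bar>b \<alpha> - t\<bar>" using gam_att[OF m_pos] by blast
      show ?thesis
      proof (cases "\<bar>t - a \<alpha>\<bar> \<le> \<bar>b \<alpha> - t\<bar>")
        case True
        then have "gm t = \<bar>t - a \<alpha>\<bar>" using al by simp
        moreover have "g t \<le> CA \<alpha> * sqrt \<bar>t - a \<alpha>\<bar>" using CA al \<open>t \<in> J\<close> by blast
        moreover have "CA \<alpha> * sqrt \<bar>t - a \<alpha>\<bar> \<le> C * sqrt \<bar>t - a \<alpha>\<bar>" using Cge al by (intro mult_right_mono) auto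
        ultimately show ?thesis by simp
      next
        case False
        then have "gm t = \<bar>t - b \<alpha>\<bar>" using al by simp
        moreover have "g t \<le> CB \<alpha> * sqrt \<bar>t - b \<alpha>\<bar>" using CB al \<open>t \<in> J\<close> by blast
        moreover have "CB \<alpha> * sqrt \<bar>t - b \<alpha>\<bar> \<le> C * sqrt \<bar>t - b \<alpha>\<bar>" using Cge al by (intro mult_right_mono) auto
        ultimately show ?thesis by simp
      qed
    qed
  qed
qed

lemma N_bound:
  assumes A[measurable]: "A \<in> sets borel" and B: "0 \<le> B" and cd: "c1 \<le> d1" "c2 \<le> d2"
    and h: "\<And>t. t \<in> A \<Longrightarrow> g t \<le> B * (indicator {c1..d1} t + indicator {c2..d2} t)"
  shows "measure N A \<le> B * ((d1 - c1) + (d2 - c2))"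
proof -
  interpret N: real_distribution N by (rule N_distr)
  have "emeasure N A = (\<integral>\<^sup>+ x. ennreal (g x) * indicator A x \<partial>lborel)" by (rule emeasure_N) simp
  also have "\<dots> \<le> (\<integral>\<^sup>+ x. ennreal B * indicator {c1..d1} x + ennreal B * indicator {c2..d2} x \<partial>lborel)"
  proof (intro nn_integral_mono)
    fix x
    show "ennreal (g x) * indicator A x \<le> ennreal B * indicator {c1..d1} x + ennreal B * indicator {c2..d2} x"
    proof (cases "x \<in> A")
      case True
      have "ennreal (g x) \<le> ennreal (B * (indicator {c1..d1} x + indicator {c2..d2} x))"
        by (rule ennreal_leI) (rule h[OF True])
      also have "\<dots> = ennreal B * indicator {c1..d1} x + ennreal B * indicator {c2..d2} x"
        using B by (auto split: split_indicator simp: ennreal_mult' ennreal_plus[symmetric] mult.commute simp del: ennreal_plus)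
      finally show ?thesis using True by simp
    qed simp
  qed
  also have "\<dots> = ennreal B * emeasure lborel {c1..d1} + ennreal B * emeasure lborel {c2..d2}"
    by (subst nn_integral_add) (auto simp: nn_integral_cmult_indicator)
  also have "\<dots> = ennreal (B * ((d1 - c1) + (d2 - c2)))"
    using B cd by (simp add: emeasure_lborel_Icc_eq ennreal_mult[symmetric] ennreal_plus[symmetric] distrib_left del: ennreal_plus)
  finally have "emeasure N A \<le> ennreal (B * ((d1 - c1) + (d2 - c2)))" .
  then show ?thesis using B cd by (simp add: N.emeasure_eq_measure)
qed

end

lemma gam_in':
  assumes m: "0 < m" and intervals: "\<forall>\<alpha><m. a \<alpha> < b \<alpha>"
    and disjoint: "\<forall>\<alpha><m. \<forall>\<beta><m. \<alpha> \<noteq> \<beta> \<longrightarrow> b \<alpha> < a \<beta> \<or> b \<beta> < a \<alpha>"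
    and al: "\<alpha> < m" and x: "x \<in> {a \<alpha>..b \<alpha>}"
  shows "gam m a b x = min (x - a \<alpha>) (b \<alpha> - x)"
proof (rule antisym)
  show "gam m a b x \<le> min (x - a \<alpha>) (b \<alpha> - x)" using gam_le[OF al, of a b x] x by simp
  show "min (x - a \<alpha>) (b \<alpha> - x) \<le> gam m a b x"
  proof (rule gam_ge[OF m])
    fix \<beta> assume be: "\<beta> < m"
    show "min (x - a \<alpha>) (b \<alpha> - x) \<le> min \<bar>x - a \<beta>\<bar> \<bar>b \<beta> - x\<bar>"
    proof (cases "\<beta> = \<alpha>")
      case True then show ?thesis using x by simp
    next
      case False
      then have "b \<alpha> < a \<beta> \<or> b \<beta> < a \<alpha>" using disjoint al be by blast
      moreover have "a \<beta> < b \<beta>" using intervals be by blast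
      ultimately show ?thesis using x by (auto simp: min_def abs_if)
    qed
  qed
qed

lemma geom_pos:
  assumes m: "0 < m" and intervals: "\<forall>\<alpha><m. a \<alpha> < b \<alpha>"
    and disjoint: "\<forall>\<alpha><m. \<forall>\<beta><m. \<alpha> \<noteq> \<beta> \<longrightarrow> b \<alpha> < a \<beta> \<or> b \<beta> < a \<alpha>"
    and e: "0 < \<epsilon>" and small: "\<forall>\<alpha><m. 10 * \<epsilon> \<le> b \<alpha> - a \<alpha>"
    and nb: "\<not> (\<exists>\<alpha><m. x0 \<in> {a \<alpha>..b \<alpha>} \<and> 2 * \<epsilon> \<le> gam m a b x0)"
  shows "(\<forall>t\<in>suppJ m a b. x0 \<le> t \<longrightarrow> t \<le> x0 + 2 * \<epsilon> \<and> gam m a b t \<le> 2 * \<epsilon>) \<or>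
    (\<exists>x1 \<beta>. \<beta> < m \<and> x1 \<in> {a \<beta>..b \<beta>} \<and> \<epsilon> / 2 \<le> gam m a b x1 \<and> x0 + \<epsilon> \<le> x1 \<and>
      (\<forall>t\<in>suppJ m a b. x0 \<le> t \<and> t \<le> x1 + \<epsilon> \<longrightarrow> gam m a b t \<le> 4 * \<epsilon> \<and> (t \<le> x0 + 2 * \<epsilon> \<or> x1 - 3 * \<epsilon> \<le> t)))"
proof -
  note gin = gam_in'[OF m intervals disjoint]
  have edge: "t \<le> x0 + 2 * \<epsilon> \<and> gam m a b t \<le> 2 * \<epsilon>"
    if z: "\<zeta> < m" "a \<zeta> + 2 * \<epsilon> < x0" "x0 \<le> t" "t \<le> b \<zeta>" for \<zeta> t
  proof -
    have x0in: "x0 \<in> {a \<zeta>..b \<zeta>}" using z e by auto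
    then have "gam m a b x0 < 2 * \<epsilon>" using nb z(1) by force
    then have "b \<zeta> - x0 < 2 * \<epsilon>" using gin[OF z(1) x0in] z by (auto simp: min_def split: if_splits)
    moreover have "gam m a b t \<le> \<bar>b \<zeta> - t\<bar>" using gam_le[OF z(1), of a b t] by simp
    ultimately show ?thesis using z by simp
  qed
  define S where "S = {\<beta>. \<beta> < m \<and> x0 \<le> a \<beta> + 2 * \<epsilon>}"
  show ?thesis
  proof (cases "S = {}")
    case True
    have "\<forall>t\<in>suppJ m a b. x0 \<le> t \<longrightarrow> t \<le> x0 + 2 * \<epsilon> \<and> gam m a b t \<le> 2 * \<epsilon>"
    proof (intro ballI impI)
      fix t assume t: "t \<in> suppJ m a b" "x0 \<le> t"
      then obtain \<zeta> where z: "\<zeta> < m" "t \<in> {a \<zeta>..b \<zeta>}" unfolding suppJ_def by auto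
      then have "\<zeta> \<notin> S" using True by auto
      then have "a \<zeta> + 2 * \<epsilon> < x0" using z by (auto simp: S_def)
      then show "t \<le> x0 + 2 * \<epsilon> \<and> gam m a b t \<le> 2 * \<epsilon>" using edge[OF z(1)] t z by auto
    qed
    then show ?thesis by blast
  next
    case False
    have fS: "finite S" unfolding S_def by simp
    define \<beta> where "\<beta> = arg_min_on a S"
    obtain \<beta>0 where "\<beta>0 \<in> S" using False by blast
    have bS: "\<beta> \<in> S" and bmin: "\<And>\<beta>'. \<beta>' \<in> S \<Longrightarrow> a \<beta> \<le> a \<beta>'"
      using arg_min_if_finite[OF fS False, of a] unfolding \<beta>_def by (auto simp: not_less)
    have bm: "\<beta> < m" and bx0: "x0 \<le> a \<beta> + 2 * \<epsilon>" using bS by (auto simp: S_def)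
    have len: "10 * \<epsilon> \<le> b \<beta> - a \<beta>" using small bm by blast
    define x1 where "x1 = a \<beta> + 3 * \<epsilon>"
    have x1in: "x1 \<in> {a \<beta>..b \<beta>}" using len e by (auto simp: x1_def)
    have "gam m a b x1 = min (x1 - a \<beta>) (b \<beta> - x1)" by (rule gin[OF bm x1in])
    then have gx1: "\<epsilon> / 2 \<le> gam m a b x1" using len e by (simp add: x1_def)
    have "\<forall>t\<in>suppJ m a b. x0 \<le> t \<and> t \<le> x1 + \<epsilon> \<longrightarrow> gam m a b t \<le> 4 * \<epsilon> \<and> (t \<le> x0 + 2 * \<epsilon> \<or> x1 - 3 * \<epsilon> \<le> t)"
    proof (intro ballI impI)
      fix t assume t: "t \<in> suppJ m a b" "x0 \<le> t \<and> t \<le> x1 + \<epsilon>"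
      then obtain \<zeta> where z: "\<zeta> < m" "t \<in> {a \<zeta>..b \<zeta>}" unfolding suppJ_def by auto
      show "gam m a b t \<le> 4 * \<epsilon> \<and> (t \<le> x0 + 2 * \<epsilon> \<or> x1 - 3 * \<epsilon> \<le> t)"
      proof (cases "\<zeta> = \<beta>")
        case True
        have "gam m a b t \<le> \<bar>t - a \<beta>\<bar>" using gam_le[OF bm, of a b t] by simp
        then show ?thesis using True z t e by (auto simp: x1_def)
      next
        case False
        then have "b \<zeta> < a \<beta> \<or> b \<beta> < a \<zeta>" using disjoint z(1) bm by blast
        moreover have "\<not> b \<beta> < a \<zeta>" using z t len e by (auto simp: x1_def)
        ultimately have bz: "b \<zeta> < a \<beta>" by blast
        have "\<zeta> \<notin> S"
        proof
          assume "\<zeta> \<in> S"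
          then have "a \<beta> \<le> a \<zeta>" by (rule bmin)
          then show False using bz z by auto
        qed
        then have "a \<zeta> + 2 * \<epsilon> < x0" using z by (auto simp: S_def)
        then have "t \<le> x0 + 2 * \<epsilon> \<and> gam m a b t \<le> 2 * \<epsilon>" using edge[OF z(1)] t z by auto
        then show ?thesis using e by auto
      qed
    qed
    moreover have "x0 + \<epsilon> \<le> x1" using bx0 by (simp add: x1_def)
    ultimately show ?thesis using bm x1in gx1 by blast
  qed
qed

lemma gam_refl: "gam m (\<lambda>\<alpha>. - b \<alpha>) (\<lambda>\<alpha>. - a \<alpha>) x = gam m a b (- x)"
  unfolding gam_def
  by (rule arg_cong[where f=Min], rule image_cong) (auto simp: min.commute abs_minus_commute algebra_simps)

lemma suppJ_refl: "x \<in> suppJ m (\<lambda>\<alpha>. - b \<alpha>) (\<lambda>\<alpha>. - a \<alpha>) \<longleftrightarrow> - x \<in> suppJ m a b"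
proof -
  have "(\<exists>\<alpha>\<in>{..<m}. - b \<alpha> \<le> x \<and> x \<le> - a \<alpha>) \<longleftrightarrow> (\<exists>\<alpha>\<in>{..<m}. a \<alpha> \<le> - x \<and> - x \<le> b \<alpha>)"
    by (intro bex_cong refl) auto
  then show ?thesis unfolding suppJ_def by simp
qed

lemma geom_neg:
  assumes m: "0 < m" and intervals: "\<forall>\<alpha><m. a \<alpha> < b \<alpha>"
    and disjoint: "\<forall>\<alpha><m. \<forall>\<beta><m. \<alpha> \<noteq> \<beta> \<longrightarrow> b \<alpha> < a \<beta> \<or> b \<beta> < a \<alpha>"
    and e: "0 < \<epsilon>" and small: "\<forall>\<alpha><m. 10 * \<epsilon> \<le> b \<alpha> - a \<alpha>"
    and nb: "\<not> (\<exists>\<alpha><m. x0 \<in> {a \<alpha>..b \<alpha>} \<and> 2 * \<epsilon> \<le> gam m a b x0)"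
  shows "(\<forall>t\<in>suppJ m a b. t \<le> x0 \<longrightarrow> x0 - 2 * \<epsilon> \<le> t \<and> gam m a b t \<le> 2 * \<epsilon>) \<or>
    (\<exists>x1 \<beta>. \<beta> < m \<and> x1 \<in> {a \<beta>..b \<beta>} \<and> \<epsilon> / 2 \<le> gam m a b x1 \<and> x1 \<le> x0 - \<epsilon> \<and>
      (\<forall>t\<in>suppJ m a b. x1 - \<epsilon> \<le> t \<and> t \<le> x0 \<longrightarrow> gam m a b t \<le> 4 * \<epsilon> \<and> (x0 - 2 * \<epsilon> \<le> t \<or> t \<le> x1 + 3 * \<epsilon>)))"
proof -
  let ?a = "\<lambda>\<alpha>. - b \<alpha>" and ?b = "\<lambda>\<alpha>. - a \<alpha>"
  have i': "\<forall>\<alpha><m. ?a \<alpha> < ?b \<alpha>" using intervals by auto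
  have d': "\<forall>\<alpha><m. \<forall>\<beta><m. \<alpha> \<noteq> \<beta> \<longrightarrow> ?b \<alpha> < ?a \<beta> \<or> ?b \<beta> < ?a \<alpha>" using disjoint by force
  have s': "\<forall>\<alpha><m. 10 * \<epsilon> \<le> ?b \<alpha> - ?a \<alpha>" using small by auto
  have nb': "\<not> (\<exists>\<alpha><m. - x0 \<in> {?a \<alpha>..?b \<alpha>} \<and> 2 * \<epsilon> \<le> gam m ?a ?b (- x0))"
    using nb unfolding gam_refl by auto
  from geom_pos[OF m i' d' e s' nb'] show ?thesis
  proof
    assume h: "\<forall>t\<in>suppJ m ?a ?b. - x0 \<le> t \<longrightarrow> t \<le> - x0 + 2 * \<epsilon> \<and> gam m ?a ?b t \<le> 2 * \<epsilon>"
    have "\<forall>t\<in>suppJ m a b. t \<le> x0 \<longrightarrow> x0 - 2 * \<epsilon> \<le> t \<and> gam m a b t \<le> 2 * \<epsilon>"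
    proof (intro ballI impI)
      fix t assume t: "t \<in> suppJ m a b" "t \<le> x0"
      then have "- t \<in> suppJ m ?a ?b" using suppJ_refl[of "- t" m b a] by simp
      then show "x0 - 2 * \<epsilon> \<le> t \<and> gam m a b t \<le> 2 * \<epsilon>" using h t unfolding gam_refl by force
    qed
    then show ?thesis by blast
  next
    assume "\<exists>x1 \<beta>. \<beta> < m \<and> x1 \<in> {?a \<beta>..?b \<beta>} \<and> \<epsilon> / 2 \<le> gam m ?a ?b x1 \<and> - x0 + \<epsilon> \<le> x1 \<and>
      (\<forall>t\<in>suppJ m ?a ?b. - x0 \<le> t \<and> t \<le> x1 + \<epsilon> \<longrightarrow> gam m ?a ?b t \<le> 4 * \<epsilon> \<and> (t \<le> - x0 + 2 * \<epsilon> \<or> x1 - 3 * \<epsilon> \<le> t))"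
    then obtain x1 \<beta> where h: "\<beta> < m" "x1 \<in> {?a \<beta>..?b \<beta>}" "\<epsilon> / 2 \<le> gam m ?a ?b x1" "- x0 + \<epsilon> \<le> x1"
      "\<forall>t\<in>suppJ m ?a ?b. - x0 \<le> t \<and> t \<le> x1 + \<epsilon> \<longrightarrow> gam m ?a ?b t \<le> 4 * \<epsilon> \<and> (t \<le> - x0 + 2 * \<epsilon> \<or> x1 - 3 * \<epsilon> \<le> t)"
      by blast
    have "\<forall>t\<in>suppJ m a b. - x1 - \<epsilon> \<le> t \<and> t \<le> x0 \<longrightarrow> gam m a b t \<le> 4 * \<epsilon> \<and> (x0 - 2 * \<epsilon> \<le> t \<or> t \<le> - x1 + 3 * \<epsilon>)"
    proof (intro ballI impI)
      fix t assume t: "t \<in> suppJ m a b" "- x1 - \<epsilon> \<le> t \<and> t \<le> x0"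
      then have "- t \<in> suppJ m ?a ?b" using suppJ_refl[of "- t" m b a] by simp
      then show "gam m a b t \<le> 4 * \<epsilon> \<and> (x0 - 2 * \<epsilon> \<le> t \<or> t \<le> - x1 + 3 * \<epsilon>)"
        using h(5) t unfolding gam_refl by force
    qed
    moreover have "- x1 \<in> {a \<beta>..b \<beta>}" using h(2) by auto
    moreover have "\<epsilon> / 2 \<le> gam m a b (- x1)" using h(3) unfolding gam_refl .
    ultimately show ?thesis using h(1,4) by (intro disjI2 exI[of _ "- x1"] exI[of _ \<beta>]) auto
  qed
qed


definition PD :: "real measure \<Rightarrow> real measure \<Rightarrow> real \<Rightarrow> real \<Rightarrow> real" where
  "PD M N y x = (\<integral>t. Phi y (x - t) \<partial>M) - (\<integral>t. Phi y (x - t) \<partial>N)"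

lemma PD_repr:
  assumes M: "real_distribution M" and N: "real_distribution N" and y: "0 < y"
  shows "PD M N y x = (\<integral>s. cden y s * (cdf M (x - s) - cdf N (x - s)) \<partial>lborel)"
proof -
  have i: "integrable lborel (\<lambda>s. cden y s * cdf K (x - s))" if K: "real_distribution K" for K
  proof (rule Bochner_Integration.integrable_bound[OF cden_integrable[OF y]])
    show "(\<lambda>s. cden y s * cdf K (x - s)) \<in> borel_measurable lborel"
      using cdf_meas[OF K] by measurable
    interpret K: real_distribution K by fact
    show "AE s in lborel. norm (cden y s * cdf K (x - s)) \<le> norm (cden y s)"
      using cden_nonneg[OF y] K.cdf_nonneg K.cdf_bounded_prob
      by (auto intro!: AE_I2 simp: abs_mult intro: mult_left_le)
  qed
  show ?thesis unfolding PD_def smooth_repr[OF M y] smooth_repr[OF N y]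
    using i[OF M] i[OF N] by (simp add: right_diff_distrib)
qed

lemma bai_pos:
  assumes M: "real_distribution M" and N: "real_distribution N" and y: "0 < y"
    and D: "\<And>x. \<bar>cdf M x - cdf N x\<bar> \<le> D" and h: "x0 \<le> x1 - sqrt 3 * y"
  shows "cdf M x0 - cdf N x0 \<le> (cdf N (x1 + sqrt 3 * y) - cdf N x0) + (3 * \<bar>PD M N y x1\<bar> + D) / 2"
proof -
  interpret M: real_distribution M by fact
  interpret N: real_distribution N by fact
  define L where "L = cdf M x0 - cdf N (x1 + sqrt 3 * y)"
  have D0: "0 \<le> D" using D[of 0] by simp
  show ?thesis
  proof (cases "0 \<le> L + D")
    case True
    have "L - (L + D) / 3 \<le> (\<integral>s. cden y s * (cdf M (x1 - s) - cdf N (x1 - s)) \<partial>lborel)"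
    proof (rule bai_low[OF y])
      show "(\<lambda>s. cdf M (x1 - s) - cdf N (x1 - s)) \<in> borel_measurable borel"
        using cdf_meas[OF M] cdf_meas[OF N] by measurable
      show "\<bar>cdf M (x1 - s) - cdf N (x1 - s)\<bar> \<le> D" for s by (rule D)
      show "L \<le> cdf M (x1 - s) - cdf N (x1 - s)" if s: "\<bar>s\<bar> \<le> sqrt 3 * y" for s
      proof -
        have "cdf M x0 \<le> cdf M (x1 - s)" using s h by (intro M.cdf_nondecreasing) auto
        moreover have "cdf N (x1 - s) \<le> cdf N (x1 + sqrt 3 * y)" using s by (intro N.cdf_nondecreasing) auto
        ultimately show ?thesis unfolding L_def by simp
      qed
    qed fact
    then have "L - (L + D) / 3 \<le> \<bar>PD M N y x1\<bar>" unfolding PD_repr[OF M N y] by simp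
    then show ?thesis unfolding L_def by (simp add: field_simps)
  next
    case False
    then show ?thesis unfolding L_def using D0 abs_ge_zero[of "PD M N y x1"] by (simp add: field_simps)
  qed
qed

lemma bai_neg:
  assumes M: "real_distribution M" and N: "real_distribution N" and y: "0 < y"
    and D: "\<And>x. \<bar>cdf M x - cdf N x\<bar> \<le> D" and h: "x1 + sqrt 3 * y \<le> x0"
  shows "cdf N x0 - cdf M x0 \<le> (cdf N x0 - cdf N (x1 - sqrt 3 * y)) + (3 * \<bar>PD M N y x1\<bar> + D) / 2"
proof -
  interpret M: real_distribution M by fact
  interpret N: real_distribution N by fact
  define L where "L = cdf N (x1 - sqrt 3 * y) - cdf M x0"
  have D0: "0 \<le> D" using D[of 0] by simp
  show ?thesis
  proof (cases "0 \<le> L + D")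
    case True
    have "L - (L + D) / 3 \<le> (\<integral>s. cden y s * (- (cdf M (x1 - s) - cdf N (x1 - s))) \<partial>lborel)"
    proof (rule bai_low[OF y])
      show "(\<lambda>s. - (cdf M (x1 - s) - cdf N (x1 - s))) \<in> borel_measurable borel"
        using cdf_meas[OF M] cdf_meas[OF N] by measurable
      show "\<bar>- (cdf M (x1 - s) - cdf N (x1 - s))\<bar> \<le> D" for s using D[of "x1 - s"] by simp
      show "L \<le> - (cdf M (x1 - s) - cdf N (x1 - s))" if s: "\<bar>s\<bar> \<le> sqrt 3 * y" for s
      proof -
        have "cdf M (x1 - s) \<le> cdf M x0" using s h by (intro M.cdf_nondecreasing) auto
        moreover have "cdf N (x1 - sqrt 3 * y) \<le> cdf N (x1 - s)" using s by (intro N.cdf_nondecreasing) auto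
        ultimately show ?thesis unfolding L_def by simp
      qed
    qed fact
    also have "\<dots> = - PD M N y x1" unfolding PD_repr[OF M N y]
      by (subst integral_minus[symmetric]) (simp add: algebra_simps)
    finally have "L - (L + D) / 3 \<le> \<bar>PD M N y x1\<bar>" by simp
    then show ?thesis unfolding L_def by (simp add: field_simps)
  next
    case False
    then show ?thesis unfolding L_def using D0 abs_ge_zero[of "PD M N y x1"] by (simp add: field_simps)
  qed
qed


lemma sq3: "sqrt 3 \<le> 2" by (rule real_le_lsqrt) auto
lemma sq6: "sqrt 3 * sqrt 2 \<le> 4"
proof -
  have "sqrt 3 * sqrt 2 = sqrt 6" by (simp add: real_sqrt_mult[symmetric])
  also have "\<dots> \<le> 4" by (rule real_le_lsqrt) auto
  finally show ?thesis .
qed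
lemma sq12: "sqrt 2 * (sqrt 3 * sqrt 2) \<le> 4"
proof -
  have "sqrt 2 * (sqrt 3 * sqrt 2) = 2 * sqrt 3" by (simp add: algebra_simps)
  then show ?thesis using sq3 by linarith
qed

lemma ind_bound:
  fixes B gt :: real
  assumes B: "0 \<le> B" and g: "gt \<le> B" and t: "t \<in> I1 \<or> t \<in> I2"
  shows "gt \<le> B * (indicator I1 t + indicator I2 t)"
proof -
  have "1 \<le> indicator I1 t + (indicator I2 t :: real)" using t by (auto split: split_indicator)
  then have "B * 1 \<le> B * (indicator I1 t + indicator I2 t)" by (rule mult_left_mono) (rule B)
  then show ?thesis using g by simp
qed

locale GS2 = GS +
  fixes M :: "real measure" and v \<epsilon> V C R D :: real
  assumes M: "real_distribution M"
    and v: "0 < v" and e: "0 < \<epsilon>" and small: "\<forall>\<alpha><m. 10 * \<epsilon> \<le> b \<alpha> - a \<alpha>"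
    and hv: "4 * v \<le> \<epsilon> * sqrt \<epsilon>" and vV: "v < V"
    and C0: "0 \<le> C" and gC: "\<forall>t. g t \<le> C * sqrt (gm t)"
    and R0: "0 \<le> R" and PDR: "\<forall>x1\<in>Jprime m a b \<epsilon>. \<bar>PD M N (min (v / sqrt (gm x1)) V) x1\<bar> \<le> R"
    and Dd: "\<forall>x. \<bar>cdf M x - cdf N x\<bar> \<le> D"
begin

abbreviation "F \<equiv> cdf M"
abbreviation "G \<equiv> cdf N"
definition "yv x1 = min (v / sqrt (gm x1)) V"

lemma NN: "real_distribution N" by (rule N_distr)

lemma Jp: "\<beta> < m \<Longrightarrow> x1 \<in> {a \<beta>..b \<beta>} \<Longrightarrow> \<epsilon> / 2 \<le> gm x1 \<Longrightarrow> x1 \<in> Jprime m a b \<epsilon>"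
  unfolding Jprime_def Jeps_def by auto

lemma yv_pos: "0 < gm x1 \<Longrightarrow> 0 < yv x1"
  using v vV unfolding yv_def by simp

lemma yv_le: "sqrt 3 * yv x1 \<le> sqrt 3 * (v / sqrt (gm x1))"
  unfolding yv_def by (intro mult_left_mono) auto

lemma hb: assumes g: "\<epsilon> / 2 \<le> gm x1" shows "sqrt 3 * yv x1 \<le> \<epsilon>"
proof -
  have se: "0 < sqrt \<epsilon>" using e by simp
  have gp: "0 < sqrt (gm x1)" using g e by simp
  have q: "sqrt \<epsilon> / sqrt 2 \<le> sqrt (gm x1)"
    using real_sqrt_le_mono[OF g] by (simp add: real_sqrt_divide)
  have "sqrt 3 * yv x1 \<le> sqrt 3 * (v / sqrt (gm x1))" by (rule yv_le)
  also have "\<dots> \<le> sqrt 3 * (v / (sqrt \<epsilon> / sqrt 2))"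
    using q se v gp by (intro mult_left_mono divide_left_mono) auto
  also have "\<dots> = (sqrt 3 * sqrt 2) * v / sqrt \<epsilon>" by (simp add: field_simps)
  also have "\<dots> \<le> 4 * v / sqrt \<epsilon>"
    using sq6 v se by (intro divide_right_mono mult_right_mono) auto
  also have "\<dots> \<le> \<epsilon> * sqrt \<epsilon> / sqrt \<epsilon>" using hv se by (intro divide_right_mono) auto
  also have "\<dots> = \<epsilon>" using se by simp
  finally show ?thesis .
qed

lemma PDR': "\<beta> < m \<Longrightarrow> x1 \<in> {a \<beta>..b \<beta>} \<Longrightarrow> \<epsilon> / 2 \<le> gm x1 \<Longrightarrow> \<bar>PD M N (yv x1) x1\<bar> \<le> R"
  using PDR Jp unfolding yv_def by blast

lemma D0: "0 \<le> D" using Dd by (metis abs_ge_zero order_trans)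

lemma gmpos: "\<epsilon> / 2 \<le> gm x1 \<Longrightarrow> 0 < gm x1" using e by simp

lemma Ioc_meas: "cdf N q - cdf N p = measure N {p<..q}" if "p < q" for p q
proof -
  interpret N: real_distribution N by (rule NN)
  show ?thesis using N.cdf_diff_eq[OF that] .
qed

lemma bulk_pos:
  assumes al: "\<alpha> < m" and x0: "x0 \<in> {a \<alpha>..b \<alpha>}" and g0: "2 * \<epsilon> \<le> gm x0"
  shows "F x0 - G x0 \<le> 8 * C * v + (3 * R + D) / 2"
proof -
  define \<gamma> where "\<gamma> = gm x0"
  have \<gamma>: "2 * \<epsilon> \<le> \<gamma>" using g0 by (simp add: \<gamma>_def)
  define sg where "sg = sqrt \<gamma>"
  have sg: "0 < sg" using \<gamma> e by (simp add: sg_def)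
  define s where "s = sqrt 3 * sqrt 2 * v / sg"
  have s0: "0 < s" using v sg by (simp add: s_def)
  have "sqrt 3 * sqrt 2 * v \<le> 4 * v" using sq6 v by (intro mult_right_mono) auto
  also have "\<dots> \<le> \<epsilon> * sqrt \<epsilon>" by (rule hv)
  also have "\<dots> \<le> (\<gamma> / 2) * sg" using \<gamma> e unfolding sg_def
    by (intro mult_mono real_sqrt_le_mono) auto
  finally have sle: "s \<le> \<gamma> / 2" using sg unfolding s_def by (simp add: divide_le_eq)
  define x1 where "x1 = x0 + s"
  have "\<gamma> \<le> gm x1 + \<bar>x0 - x1\<bar>" unfolding \<gamma>_def by (rule gam_lip[OF m_pos])
  then have gx1: "\<gamma> / 2 \<le> gm x1" using sle s0 by (simp add: x1_def)
  have "\<gamma> \<le> \<bar>b \<alpha> - x0\<bar>" using gam_le[OF al, of a b x0] unfolding \<gamma>_def by simp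
  then have x1in: "x1 \<in> {a \<alpha>..b \<alpha>}" using x0 sle s0 by (auto simp: x1_def)
  have gx1e: "\<epsilon> / 2 \<le> gm x1" using gx1 \<gamma> e by simp
  define y where "y = yv x1"
  have y: "0 < y" unfolding y_def by (rule yv_pos[OF gmpos[OF gx1e]])
  have "sqrt 3 * y \<le> sqrt 3 * (v / sqrt (gm x1))" unfolding y_def by (rule yv_le)
  also have "\<dots> \<le> sqrt 3 * (v / (sg / sqrt 2))"
  proof -
    have "sg / sqrt 2 \<le> sqrt (gm x1)" using real_sqrt_le_mono[OF gx1] by (simp add: sg_def real_sqrt_divide)
    moreover have "0 < sqrt (gm x1)" using gx1e e by simp
    ultimately show ?thesis using sg v by (intro mult_left_mono divide_left_mono) auto
  qed
  also have "\<dots> = s" by (simp add: s_def field_simps)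
  finally have hs: "sqrt 3 * y \<le> s" .
  have "F x0 - G x0 \<le> (G (x1 + sqrt 3 * y) - G x0) + (3 * \<bar>PD M N y x1\<bar> + D) / 2"
    by (rule bai_pos[OF M NN y]) (use Dd hs in \<open>auto simp: x1_def\<close>)
  moreover have "\<bar>PD M N y x1\<bar> \<le> R" unfolding y_def by (rule PDR'[OF al x1in gx1e])
  moreover have "G (x1 + sqrt 3 * y) - G x0 \<le> 8 * C * v"
  proof -
    have y3: "0 < sqrt 3 * y" using y by simp
    have "G (x1 + sqrt 3 * y) - G x0 = measure N {x0<..x1 + sqrt 3 * y}"
      by (rule Ioc_meas) (use y3 s0 in \<open>simp add: x1_def\<close>)
    also have "\<dots> \<le> (C * sqrt (2 * \<gamma>)) * ((x0 + 2 * s - x0) + (x0 - x0))"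
    proof (rule N_bound)
      show "0 \<le> C * sqrt (2 * \<gamma>)" using C0 \<gamma> e by simp
      fix t assume t: "t \<in> {x0<..x1 + sqrt 3 * y}"
      then have tw: "x0 \<le> t" "t \<le> x0 + 2 * s" using hs by (auto simp: x1_def)
      have "gm t \<le> gm x0 + \<bar>t - x0\<bar>" by (rule gam_lip[OF m_pos])
      then have "gm t \<le> 2 * \<gamma>" using tw sle unfolding \<gamma>_def by simp
      then have "g t \<le> C * sqrt (2 * \<gamma>)"
        using gC C0 by (meson mult_left_mono order_trans real_sqrt_le_mono)
      then show "g t \<le> C * sqrt (2 * \<gamma>) * (indicator {x0..x0 + 2 * s} t + indicator {x0..x0} t)"
      proof -
        have Bn: "0 \<le> C * sqrt (2 * \<gamma>)" using C0 \<gamma> e by simp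
        show ?thesis by (rule ind_bound[OF Bn \<open>g t \<le> C * sqrt (2 * \<gamma>)\<close>]) (use tw in auto)
      qed
    qed (use s0 in auto)
    also have "\<dots> = C * (sqrt 2 * sg) * (2 * s)" by (simp add: sg_def real_sqrt_mult)
    also have "\<dots> = 2 * C * v * (sqrt 2 * (sqrt 3 * sqrt 2))" using sg by (simp add: s_def field_simps)
    also have "\<dots> \<le> 2 * C * v * 4" using sq12 C0 v by (intro mult_left_mono) auto
    finally show ?thesis by simp
  qed
  ultimately show ?thesis by (simp add: field_simps)
qed

lemma bulk_neg:
  assumes al: "\<alpha> < m" and x0: "x0 \<in> {a \<alpha>..b \<alpha>}" and g0: "2 * \<epsilon> \<le> gm x0"
  shows "G x0 - F x0 \<le> 8 * C * v + (3 * R + D) / 2"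
proof -
  define \<gamma> where "\<gamma> = gm x0"
  have \<gamma>: "2 * \<epsilon> \<le> \<gamma>" using g0 by (simp add: \<gamma>_def)
  define sg where "sg = sqrt \<gamma>"
  have sg: "0 < sg" using \<gamma> e by (simp add: sg_def)
  define s where "s = sqrt 3 * sqrt 2 * v / sg"
  have s0: "0 < s" using v sg by (simp add: s_def)
  have "sqrt 3 * sqrt 2 * v \<le> 4 * v" using sq6 v by (intro mult_right_mono) auto
  also have "\<dots> \<le> \<epsilon> * sqrt \<epsilon>" by (rule hv)
  also have "\<dots> \<le> (\<gamma> / 2) * sg" using \<gamma> e unfolding sg_def
    by (intro mult_mono real_sqrt_le_mono) auto
  finally have sle: "s \<le> \<gamma> / 2" using sg unfolding s_def by (simp add: divide_le_eq)
  define x1 where "x1 = x0 - s"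
  have "\<gamma> \<le> gm x1 + \<bar>x0 - x1\<bar>" unfolding \<gamma>_def by (rule gam_lip[OF m_pos])
  then have gx1: "\<gamma> / 2 \<le> gm x1" using sle s0 by (simp add: x1_def)
  have "\<gamma> \<le> \<bar>x0 - a \<alpha>\<bar>" using gam_le[OF al, of a b x0] unfolding \<gamma>_def by simp
  then have x1in: "x1 \<in> {a \<alpha>..b \<alpha>}" using x0 sle s0 by (auto simp: x1_def)
  have gx1e: "\<epsilon> / 2 \<le> gm x1" using gx1 \<gamma> e by simp
  define y where "y = yv x1"
  have y: "0 < y" unfolding y_def by (rule yv_pos[OF gmpos[OF gx1e]])
  have "sqrt 3 * y \<le> sqrt 3 * (v / sqrt (gm x1))" unfolding y_def by (rule yv_le)
  also have "\<dots> \<le> sqrt 3 * (v / (sg / sqrt 2))"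
  proof -
    have "sg / sqrt 2 \<le> sqrt (gm x1)" using real_sqrt_le_mono[OF gx1] by (simp add: sg_def real_sqrt_divide)
    moreover have "0 < sqrt (gm x1)" using gx1e e by simp
    ultimately show ?thesis using sg v by (intro mult_left_mono divide_left_mono) auto
  qed
  also have "\<dots> = s" by (simp add: s_def field_simps)
  finally have hs: "sqrt 3 * y \<le> s" .
  have "G x0 - F x0 \<le> (G x0 - G (x1 - sqrt 3 * y)) + (3 * \<bar>PD M N y x1\<bar> + D) / 2"
    by (rule bai_neg[OF M NN y]) (use Dd hs in \<open>auto simp: x1_def\<close>)
  moreover have "\<bar>PD M N y x1\<bar> \<le> R" unfolding y_def by (rule PDR'[OF al x1in gx1e])
  moreover have "G x0 - G (x1 - sqrt 3 * y) \<le> 8 * C * v"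
  proof -
    have y3: "0 < sqrt 3 * y" using y by simp
    have "G x0 - G (x1 - sqrt 3 * y) = measure N {x1 - sqrt 3 * y<..x0}"
      by (rule Ioc_meas) (use y3 s0 in \<open>simp add: x1_def\<close>)
    also have "\<dots> \<le> (C * sqrt (2 * \<gamma>)) * ((x0 - (x0 - 2 * s)) + (x0 - x0))"
    proof (rule N_bound)
      show "0 \<le> C * sqrt (2 * \<gamma>)" using C0 \<gamma> e by simp
      fix t assume t: "t \<in> {x1 - sqrt 3 * y<..x0}"
      then have tw: "x0 - 2 * s \<le> t" "t \<le> x0" using hs by (auto simp: x1_def)
      have "gm t \<le> gm x0 + \<bar>t - x0\<bar>" by (rule gam_lip[OF m_pos])
      then have "gm t \<le> 2 * \<gamma>" using tw sle unfolding \<gamma>_def by simp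
      then have gt: "g t \<le> C * sqrt (2 * \<gamma>)"
        using gC C0 by (meson mult_left_mono order_trans real_sqrt_le_mono)
      have Bn: "0 \<le> C * sqrt (2 * \<gamma>)" using C0 \<gamma> e by simp
      show "g t \<le> C * sqrt (2 * \<gamma>) * (indicator {x0 - 2 * s..x0} t + indicator {x0..x0} t)"
        by (rule ind_bound[OF Bn gt]) (use tw in auto)
    qed (use s0 in auto)
    also have "\<dots> = C * (sqrt 2 * sg) * (2 * s)" by (simp add: sg_def real_sqrt_mult)
    also have "\<dots> = 2 * C * v * (sqrt 2 * (sqrt 3 * sqrt 2))" using sg by (simp add: s_def field_simps)
    also have "\<dots> \<le> 2 * C * v * 4" using sq12 C0 v by (intro mult_left_mono) auto
    finally show ?thesis by simp
  qed
  ultimately show ?thesis by (simp add: field_simps)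
qed

lemma sq4e: "sqrt (4 * \<epsilon>) = 2 * sqrt \<epsilon>" by (simp add: real_sqrt_mult)
lemma sq2e: "sqrt (2 * \<epsilon>) \<le> 2 * sqrt \<epsilon>"
proof -
  have "sqrt (2 * \<epsilon>) \<le> sqrt (4 * \<epsilon>)" using e by (intro real_sqrt_le_mono) auto
  then show ?thesis by (simp add: sq4e)
qed

lemma edge_pos:
  assumes be: "\<beta> < m" and x1in: "x1 \<in> {a \<beta>..b \<beta>}" and gx1e: "\<epsilon> / 2 \<le> gm x1" and x01: "x0 + \<epsilon> \<le> x1"
    and win: "\<forall>t\<in>J. x0 \<le> t \<and> t \<le> x1 + \<epsilon> \<longrightarrow> gm t \<le> 4 * \<epsilon> \<and> (t \<le> x0 + 2 * \<epsilon> \<or> x1 - 3 * \<epsilon> \<le> t)"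
  shows "F x0 - G x0 \<le> 12 * C * (\<epsilon> * sqrt \<epsilon>) + (3 * R + D) / 2"
proof -
  define y where "y = yv x1"
  have y: "0 < y" unfolding y_def by (rule yv_pos[OF gmpos[OF gx1e]])
  have hs: "sqrt 3 * y \<le> \<epsilon>" unfolding y_def by (rule hb[OF gx1e])
  have "F x0 - G x0 \<le> (G (x1 + sqrt 3 * y) - G x0) + (3 * \<bar>PD M N y x1\<bar> + D) / 2"
    by (rule bai_pos[OF M NN y]) (use Dd hs x01 in auto)
  moreover have "\<bar>PD M N y x1\<bar> \<le> R" unfolding y_def by (rule PDR'[OF be x1in gx1e])
  moreover have "G (x1 + sqrt 3 * y) - G x0 \<le> 12 * C * (\<epsilon> * sqrt \<epsilon>)"
  proof -
    have y3: "0 < sqrt 3 * y" using y by simp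
    have Bn: "0 \<le> C * sqrt (4 * \<epsilon>)" using C0 e by simp
    have "G (x1 + sqrt 3 * y) - G x0 = measure N {x0<..x1 + sqrt 3 * y}"
      by (rule Ioc_meas) (use y3 x01 e in simp)
    also have "\<dots> \<le> (C * sqrt (4 * \<epsilon>)) * ((x0 + 2 * \<epsilon> - x0) + (x1 + \<epsilon> - (x1 - 3 * \<epsilon>)))"
    proof (rule N_bound)
      show "0 \<le> C * sqrt (4 * \<epsilon>)" by (rule Bn)
      fix t assume t: "t \<in> {x0<..x1 + sqrt 3 * y}"
      show "g t \<le> C * sqrt (4 * \<epsilon>) * (indicator {x0..x0 + 2 * \<epsilon>} t + indicator {x1 - 3 * \<epsilon>..x1 + \<epsilon>} t)"
      proof (cases "t \<in> J")
        case True
        have tw: "x0 \<le> t" "t \<le> x1 + \<epsilon>" using t hs by auto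
        then have w: "gm t \<le> 4 * \<epsilon> \<and> (t \<le> x0 + 2 * \<epsilon> \<or> x1 - 3 * \<epsilon> \<le> t)" using win True by blast
        then have gt: "g t \<le> C * sqrt (4 * \<epsilon>)"
          using gC C0 by (meson mult_left_mono order_trans real_sqrt_le_mono)
        show ?thesis by (rule ind_bound[OF Bn gt]) (use tw w in auto)
      next
        case False
        then show ?thesis using g_zero_outside[OF False] Bn by simp
      qed
    qed (use e in auto)
    also have "\<dots> = 12 * C * (\<epsilon> * sqrt \<epsilon>)" unfolding sq4e by (simp add: algebra_simps)
    finally show ?thesis .
  qed
  ultimately show ?thesis by (simp add: field_simps)
qed

lemma edge_neg:
  assumes be: "\<beta> < m" and x1in: "x1 \<in> {a \<beta>..b \<beta>}" and gx1e: "\<epsilon> / 2 \<le> gm x1" and x01: "x1 \<le> x0 - \<epsilon>"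
    and win: "\<forall>t\<in>J. x1 - \<epsilon> \<le> t \<and> t \<le> x0 \<longrightarrow> gm t \<le> 4 * \<epsilon> \<and> (x0 - 2 * \<epsilon> \<le> t \<or> t \<le> x1 + 3 * \<epsilon>)"
  shows "G x0 - F x0 \<le> 12 * C * (\<epsilon> * sqrt \<epsilon>) + (3 * R + D) / 2"
proof -
  define y where "y = yv x1"
  have y: "0 < y" unfolding y_def by (rule yv_pos[OF gmpos[OF gx1e]])
  have hs: "sqrt 3 * y \<le> \<epsilon>" unfolding y_def by (rule hb[OF gx1e])
  have "G x0 - F x0 \<le> (G x0 - G (x1 - sqrt 3 * y)) + (3 * \<bar>PD M N y x1\<bar> + D) / 2"
    by (rule bai_neg[OF M NN y]) (use Dd hs x01 in auto)
  moreover have "\<bar>PD M N y x1\<bar> \<le> R" unfolding y_def by (rule PDR'[OF be x1in gx1e])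
  moreover have "G x0 - G (x1 - sqrt 3 * y) \<le> 12 * C * (\<epsilon> * sqrt \<epsilon>)"
  proof -
    have y3: "0 < sqrt 3 * y" using y by simp
    have Bn: "0 \<le> C * sqrt (4 * \<epsilon>)" using C0 e by simp
    have "G x0 - G (x1 - sqrt 3 * y) = measure N {x1 - sqrt 3 * y<..x0}"
      by (rule Ioc_meas) (use y3 x01 e in simp)
    also have "\<dots> \<le> (C * sqrt (4 * \<epsilon>)) * ((x0 - (x0 - 2 * \<epsilon>)) + (x1 + 3 * \<epsilon> - (x1 - \<epsilon>)))"
    proof (rule N_bound)
      show "0 \<le> C * sqrt (4 * \<epsilon>)" by (rule Bn)
      fix t assume t: "t \<in> {x1 - sqrt 3 * y<..x0}"
      show "g t \<le> C * sqrt (4 * \<epsilon>) * (indicator {x0 - 2 * \<epsilon>..x0} t + indicator {x1 - \<epsilon>..x1 + 3 * \<epsilon>} t)"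
      proof (cases "t \<in> J")
        case True
        have tw: "x1 - \<epsilon> \<le> t" "t \<le> x0" using t hs by auto
        then have w: "gm t \<le> 4 * \<epsilon> \<and> (x0 - 2 * \<epsilon> \<le> t \<or> t \<le> x1 + 3 * \<epsilon>)" using win True by blast
        then have gt: "g t \<le> C * sqrt (4 * \<epsilon>)"
          using gC C0 by (meson mult_left_mono order_trans real_sqrt_le_mono)
        show ?thesis by (rule ind_bound[OF Bn gt]) (use tw w in auto)
      next
        case False
        then show ?thesis using g_zero_outside[OF False] Bn by simp
      qed
    qed (use e in auto)
    also have "\<dots> = 12 * C * (\<epsilon> * sqrt \<epsilon>)" unfolding sq4e by (simp add: algebra_simps)
    finally show ?thesis .
  qed
  ultimately show ?thesis by (simp add: field_simps)
qed

lemma tail_pos: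
  assumes tl: "\<forall>t\<in>J. x0 \<le> t \<longrightarrow> t \<le> x0 + 2 * \<epsilon> \<and> gm t \<le> 2 * \<epsilon>"
  shows "F x0 - G x0 \<le> 12 * C * (\<epsilon> * sqrt \<epsilon>)"
proof -
  interpret N: real_distribution N by (rule NN)
  interpret MM: real_distribution M by (rule M)
  have Bn: "0 \<le> C * sqrt (2 * \<epsilon>)" using C0 e by simp
  have "1 - G x0 = measure N (space N - {..x0})"
  proof -
    have "measure N UNIV = 1" using N.prob_space N.space_eq_univ by simp
    then show ?thesis by (subst N.finite_measure_compl) (auto simp: cdf_def)
  qed
  also have "space N - {..x0} = {x0<..}" by auto
  also have "measure N {x0<..} \<le> (C * sqrt (2 * \<epsilon>)) * ((x0 + 2 * \<epsilon> - x0) + (x0 - x0))"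
  proof (rule N_bound)
    show "0 \<le> C * sqrt (2 * \<epsilon>)" by (rule Bn)
    fix t assume t: "t \<in> {x0<..}"
    show "g t \<le> C * sqrt (2 * \<epsilon>) * (indicator {x0..x0 + 2 * \<epsilon>} t + indicator {x0..x0} t)"
    proof (cases "t \<in> J")
      case True
      then have w: "t \<le> x0 + 2 * \<epsilon> \<and> gm t \<le> 2 * \<epsilon>" using tl t by auto
      then have gt: "g t \<le> C * sqrt (2 * \<epsilon>)"
        using gC C0 by (meson mult_left_mono order_trans real_sqrt_le_mono)
      show ?thesis by (rule ind_bound[OF Bn gt]) (use t w in auto)
    next
      case False
      then show ?thesis using g_zero_outside[OF False] Bn by simp
    qed
  qed (use e in auto)
  also have "\<dots> = (C * sqrt (2 * \<epsilon>)) * (2 * \<epsilon>)" by simp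
  also have "\<dots> \<le> (C * (2 * sqrt \<epsilon>)) * (2 * \<epsilon>)"
    using sq2e C0 e by (intro mult_right_mono mult_left_mono) auto
  also have "\<dots> \<le> 12 * C * (\<epsilon> * sqrt \<epsilon>)" using C0 e by (simp add: algebra_simps)
  finally have "1 - G x0 \<le> 12 * C * (\<epsilon> * sqrt \<epsilon>)" .
  moreover have "F x0 \<le> 1" by (rule MM.cdf_bounded_prob)
  ultimately show ?thesis by simp
qed

lemma tail_neg:
  assumes tl: "\<forall>t\<in>J. t \<le> x0 \<longrightarrow> x0 - 2 * \<epsilon> \<le> t \<and> gm t \<le> 2 * \<epsilon>"
  shows "G x0 - F x0 \<le> 12 * C * (\<epsilon> * sqrt \<epsilon>)"
proof -
  interpret N: real_distribution N by (rule NN)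
  interpret MM: real_distribution M by (rule M)
  have Bn: "0 \<le> C * sqrt (2 * \<epsilon>)" using C0 e by simp
  have "G x0 = measure N {..x0}" by (simp add: cdf_def)
  also have "\<dots> \<le> (C * sqrt (2 * \<epsilon>)) * ((x0 - (x0 - 2 * \<epsilon>)) + (x0 - x0))"
  proof (rule N_bound)
    show "0 \<le> C * sqrt (2 * \<epsilon>)" by (rule Bn)
    fix t assume t: "t \<in> {..x0}"
    show "g t \<le> C * sqrt (2 * \<epsilon>) * (indicator {x0 - 2 * \<epsilon>..x0} t + indicator {x0..x0} t)"
    proof (cases "t \<in> J")
      case True
      then have w: "x0 - 2 * \<epsilon> \<le> t \<and> gm t \<le> 2 * \<epsilon>" using tl t by auto
      then have gt: "g t \<le> C * sqrt (2 * \<epsilon>)"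
        using gC C0 by (meson mult_left_mono order_trans real_sqrt_le_mono)
      show ?thesis by (rule ind_bound[OF Bn gt]) (use t w in auto)
    next
      case False
      then show ?thesis using g_zero_outside[OF False] Bn by simp
    qed
  qed (use e in auto)
  also have "\<dots> = (C * sqrt (2 * \<epsilon>)) * (2 * \<epsilon>)" by simp
  also have "\<dots> \<le> (C * (2 * sqrt \<epsilon>)) * (2 * \<epsilon>)"
    using sq2e C0 e by (intro mult_right_mono mult_left_mono) auto
  also have "\<dots> \<le> 12 * C * (\<epsilon> * sqrt \<epsilon>)" using C0 e by (simp add: algebra_simps)
  finally have "G x0 \<le> 12 * C * (\<epsilon> * sqrt \<epsilon>)" .
  moreover have "0 \<le> F x0" by (rule MM.cdf_nonneg)
  ultimately show ?thesis by simp
qed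

lemma point:
  "\<bar>F x0 - G x0\<bar> \<le> 8 * C * v + 12 * C * (\<epsilon> * sqrt \<epsilon>) + (3 * R + D) / 2"
proof -
  have n1: "0 \<le> 8 * C * v" using C0 v by simp
  have n2: "0 \<le> 12 * C * (\<epsilon> * sqrt \<epsilon>)" using C0 e by simp
  have n3: "0 \<le> (3 * R + D) / 2" using R0 D0 by simp
  note geo = geom_pos[OF m_pos intervals disjoint e small] geom_neg[OF m_pos intervals disjoint e small]
  show ?thesis
  proof (cases "0 \<le> F x0 - G x0")
    case True
    have "F x0 - G x0 \<le> 8 * C * v + 12 * C * (\<epsilon> * sqrt \<epsilon>) + (3 * R + D) / 2"
    proof (cases "\<exists>\<alpha><m. x0 \<in> {a \<alpha>..b \<alpha>} \<and> 2 * \<epsilon> \<le> gm x0")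
      case True
      then obtain \<alpha> where "\<alpha> < m" "x0 \<in> {a \<alpha>..b \<alpha>}" "2 * \<epsilon> \<le> gm x0" by blast
      from bulk_pos[OF this] n2 show ?thesis by simp
    next
      case False
      from geo(1)[OF False] show ?thesis
      proof
        assume "\<forall>t\<in>J. x0 \<le> t \<longrightarrow> t \<le> x0 + 2 * \<epsilon> \<and> gm t \<le> 2 * \<epsilon>"
        from tail_pos[OF this] n1 n3 show ?thesis by (smt (verit))
      next
        assume "\<exists>x1 \<beta>. \<beta> < m \<and> x1 \<in> {a \<beta>..b \<beta>} \<and> \<epsilon> / 2 \<le> gm x1 \<and> x0 + \<epsilon> \<le> x1 \<and>
          (\<forall>t\<in>J. x0 \<le> t \<and> t \<le> x1 + \<epsilon> \<longrightarrow> gm t \<le> 4 * \<epsilon> \<and> (t \<le> x0 + 2 * \<epsilon> \<or> x1 - 3 * \<epsilon> \<le> t))"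
        then obtain x1 \<beta> where "\<beta> < m" "x1 \<in> {a \<beta>..b \<beta>}" "\<epsilon> / 2 \<le> gm x1" "x0 + \<epsilon> \<le> x1"
          "\<forall>t\<in>J. x0 \<le> t \<and> t \<le> x1 + \<epsilon> \<longrightarrow> gm t \<le> 4 * \<epsilon> \<and> (t \<le> x0 + 2 * \<epsilon> \<or> x1 - 3 * \<epsilon> \<le> t)"
          by blast
        from edge_pos[OF this] n1 show ?thesis by (smt (verit))
      qed
    qed
    then show ?thesis using True by simp
  next
    case False
    have "G x0 - F x0 \<le> 8 * C * v + 12 * C * (\<epsilon> * sqrt \<epsilon>) + (3 * R + D) / 2"
    proof (cases "\<exists>\<alpha><m. x0 \<in> {a \<alpha>..b \<alpha>} \<and> 2 * \<epsilon> \<le> gm x0")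
      case True
      then obtain \<alpha> where "\<alpha> < m" "x0 \<in> {a \<alpha>..b \<alpha>}" "2 * \<epsilon> \<le> gm x0" by blast
      from bulk_neg[OF this] n2 show ?thesis by simp
    next
      case False
      from geo(2)[OF False] show ?thesis
      proof
        assume "\<forall>t\<in>J. t \<le> x0 \<longrightarrow> x0 - 2 * \<epsilon> \<le> t \<and> gm t \<le> 2 * \<epsilon>"
        from tail_neg[OF this] n1 n3 show ?thesis by (smt (verit))
      next
        assume "\<exists>x1 \<beta>. \<beta> < m \<and> x1 \<in> {a \<beta>..b \<beta>} \<and> \<epsilon> / 2 \<le> gm x1 \<and> x1 \<le> x0 - \<epsilon> \<and>
          (\<forall>t\<in>J. x1 - \<epsilon> \<le> t \<and> t \<le> x0 \<longrightarrow> gm t \<le> 4 * \<epsilon> \<and> (x0 - 2 * \<epsilon> \<le> t \<or> t \<le> x1 + 3 * \<epsilon>))"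
        then obtain x1 \<beta> where "\<beta> < m" "x1 \<in> {a \<beta>..b \<beta>}" "\<epsilon> / 2 \<le> gm x1" "x1 \<le> x0 - \<epsilon>"
          "\<forall>t\<in>J. x1 - \<epsilon> \<le> t \<and> t \<le> x0 \<longrightarrow> gm t \<le> 4 * \<epsilon> \<and> (x0 - 2 * \<epsilon> \<le> t \<or> t \<le> x1 + 3 * \<epsilon>)"
          by blast
        from edge_neg[OF this] n1 show ?thesis by (smt (verit))
      qed
    qed
    then show ?thesis using False by simp
  qed
qed

end

theorem corollaryB4:
  fixes N :: "real measure" and g :: "real \<Rightarrow> real"
    and m :: nat and a b :: "nat \<Rightarrow> real"
  assumes m_pos: "m > 0"
    and intervals: "\<forall>\<alpha><m. a \<alpha> < b \<alpha>"
    and disjoint: "\<forall>\<alpha><m. \<forall>\<beta><m. \<alpha> \<noteq> \<beta> \<longrightarrow> b \<alpha> < a \<beta> \<or> b \<beta> < a \<alpha>"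
    and N_distr: "real_distribution N"
    and g_meas: "g \<in> borel_measurable borel"
    and g_nonneg: "\<forall>x. 0 \<le> g x"
    and N_density: "N = density lborel (\<lambda>x. ennreal (g x))"
    and g_bounded: "\<exists>K. \<forall>x. \<bar>g x\<bar> \<le> K"
    and g_ac: "abs_cont_on UNIV g"
    and support: "measure_support N = suppJ m a b"
    and edges: "\<forall>\<alpha><m. \<forall>c\<in>{a \<alpha>, b \<alpha>}. \<exists>c1>0. \<exists>c2>0. \<exists>\<delta>>0.
        \<forall>x\<in>suppJ m a b. \<bar>x - c\<bar> < \<delta> \<longrightarrow>
          c1 * sqrt \<bar>x - c\<bar> \<le> g x \<and> g x \<le> c2 * sqrt \<bar>x - c\<bar>"
  shows "\<exists>C1>0. \<exists>C2>0. \<forall>M :: real measure. \<forall>v \<epsilon> V :: real.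
      real_distribution M \<longrightarrow> v > 0 \<longrightarrow> 0 < \<epsilon> \<longrightarrow> \<epsilon> < 1/2 \<longrightarrow>
      (\<forall>\<alpha><m. \<epsilon> < (b \<alpha> - a \<alpha>) / 2) \<longrightarrow>
      2 * (sqrt 2 + 1) * v \<le> \<epsilon> powr (3/2) \<longrightarrow> V > v \<longrightarrow>
      ennreal (SUP x. \<bar>cdf M x - cdf N x\<bar>)
        \<le> 2 * (\<integral>\<^sup>+ u. ennreal (cmod (stieltjes M (Complex u V) - stieltjes N (Complex u V))) \<partial>lborel)
          + ennreal (C1 * v) + ennreal (C2 * \<epsilon> powr (3/2))
          + 2 * (SUP x\<in>Jprime m a b \<epsilon>.
                 \<integral>\<^sup>+ u. ennreal (cmod (stieltjes M (Complex x u) - stieltjes N (Complex x u)))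
                        * indicator {v / sqrt (gam m a b x)..V} u \<partial>lborel)"
proof -
  have GSh: "GS N g m a b"
    by (rule GS.intro[OF m_pos intervals disjoint N_distr g_meas g_nonneg N_density g_bounded g_ac support edges])
  interpret GS N g m a b by (rule GSh)
  obtain C where C0: "0 \<le> C" and gC: "\<forall>t. g t \<le> C * sqrt (gam m a b t)" using g_sqrt by blast
  define e0 where "e0 = Min ((\<lambda>\<alpha>. (b \<alpha> - a \<alpha>) / 10) ` {..<m})"
  have e0le: "e0 \<le> (b \<alpha> - a \<alpha>) / 10" if "\<alpha> < m" for \<alpha>
    unfolding e0_def using that by (intro Min_le) auto
  have e0pos: "0 < e0"
  proof -
    have "e0 \<in> (\<lambda>\<alpha>. (b \<alpha> - a \<alpha>) / 10) ` {..<m}" unfolding e0_def using m_pos by (intro Min_in) auto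
    then show ?thesis using intervals by auto
  qed
  define C1 where "C1 = 16 * C + 1"
  define C2 where "C2 = max (24 * C + 1) (1 / (e0 * sqrt e0))"
  have C1pos: "0 < C1" using C0 by (simp add: C1_def)
  have C2pos: "0 < C2" using C0 by (simp add: C2_def)
  show ?thesis
  proof (rule exI[of _ C1], intro conjI C1pos C2pos exI[of _ C2] allI impI)
    fix M :: "real measure" and v \<epsilon> V :: real
    assume M: "real_distribution M" and v: "0 < v" and e: "0 < \<epsilon>" and e2: "\<epsilon> < 1/2"
      and lens: "\<forall>\<alpha><m. \<epsilon> < (b \<alpha> - a \<alpha>) / 2"
      and hv0: "2 * (sqrt 2 + 1) * v \<le> \<epsilon> powr (3/2)" and vV: "V > v"
    interpret MM: real_distribution M by (rule M)
    interpret NN: real_distribution N by (rule N_distr)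
    have e32: "\<epsilon> powr (3/2) = \<epsilon> * sqrt \<epsilon>"
    proof -
      have h: "(3/2::real) = 1 + 1/2" by simp
      have "\<epsilon> powr (3/2) = \<epsilon> powr 1 * \<epsilon> powr (1/2)" unfolding h by (rule powr_add)
      then show ?thesis using e by (simp add: powr_half_sqrt)
    qed
    have hv: "4 * v \<le> \<epsilon> * sqrt \<epsilon>"
    proof -
      have "4 * v \<le> 2 * (sqrt 2 + 1) * v" using v by (intro mult_right_mono) auto
      then show ?thesis using hv0 e32 by simp
    qed
    define D where "D = (SUP x. \<bar>cdf M x - cdf N x\<bar>)"
    have abs1: "\<bar>cdf M x - cdf N x\<bar> \<le> 1" for x
      using MM.cdf_nonneg[of x] NN.cdf_nonneg[of x] MM.cdf_bounded_prob[of x] NN.cdf_bounded_prob[of x] by (simp add: abs_le_iff)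
    have bdd: "bdd_above (range (\<lambda>x. \<bar>cdf M x - cdf N x\<bar>))" using abs1 by (intro bdd_aboveI) auto
    have Dd: "\<forall>x. \<bar>cdf M x - cdf N x\<bar> \<le> D" unfolding D_def using bdd by (auto intro: cSUP_upper)
    have D1: "D \<le> 1" unfolding D_def using abs1 by (intro cSUP_least) auto
    have D0: "0 \<le> D" using Dd by (metis abs_ge_zero order_trans)
    define A where "A = (\<integral>\<^sup>+ u. ennreal (cmod (stieltjes M (Complex u V) - stieltjes N (Complex u V))) \<partial>lborel)"
    define Bs where "Bs = (SUP x\<in>Jprime m a b \<epsilon>.
                 \<integral>\<^sup>+ u. ennreal (cmod (stieltjes M (Complex x u) - stieltjes N (Complex x u)))
                        * indicator {v / sqrt (gam m a b x)..V} u \<partial>lborel)"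
    have trivial: "ennreal X \<le> 2 * A + ennreal (C1 * v) + ennreal (C2 * \<epsilon> powr (3/2)) + 2 * Bs"
      if "X \<le> C2 * \<epsilon> powr (3/2)" for X
    proof -
      have "ennreal X \<le> ennreal (C2 * \<epsilon> powr (3/2))" using that by (rule ennreal_leI)
      also have "\<dots> \<le> 2 * A + ennreal (C1 * v) + ennreal (C2 * \<epsilon> powr (3/2))"
        by (rule add_increasing) auto
      also have "\<dots> \<le> 2 * A + ennreal (C1 * v) + ennreal (C2 * \<epsilon> powr (3/2)) + 2 * Bs"
        by (rule add_increasing2) auto
      finally show ?thesis .
    qed
    have main: "ennreal D \<le> 2 * A + ennreal (C1 * v) + ennreal (C2 * \<epsilon> powr (3/2)) + 2 * Bs"
    proof (cases "\<forall>\<alpha><m. 10 * \<epsilon> \<le> b \<alpha> - a \<alpha>")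
      case False
      then obtain \<alpha> where al: "\<alpha> < m" "b \<alpha> - a \<alpha> < 10 * \<epsilon>" by auto
      have "e0 < \<epsilon>" using e0le[OF al(1)] al(2) by simp
      then have "e0 * sqrt e0 \<le> \<epsilon> * sqrt \<epsilon>" using e0pos by (intro mult_mono real_sqrt_le_mono) auto
      moreover have "0 < e0 * sqrt e0" using e0pos by simp
      ultimately have "1 \<le> (1 / (e0 * sqrt e0)) * (\<epsilon> * sqrt \<epsilon>)" by (simp add: field_simps)
      also have "\<dots> \<le> C2 * (\<epsilon> * sqrt \<epsilon>)" using e by (intro mult_right_mono) (auto simp: C2_def)
      finally have "D \<le> C2 * \<epsilon> powr (3/2)" using D1 e32 by simp
      then show ?thesis by (rule trivial)
    next
      case small: True
      show ?thesis
      proof (cases "A = \<top> \<or> Bs = \<top>")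
        case True
        then show ?thesis by (auto simp: ennreal_mult_eq_top_iff)
      next
        case False
        then have Af: "A \<noteq> \<top>" and Bf: "Bs \<noteq> \<top>" by auto
        define R where "R = (enn2real A + enn2real Bs) / pi"
        have R0: "0 \<le> R" unfolding R_def by simp
        have PDR: "\<forall>x1\<in>Jprime m a b \<epsilon>. \<bar>PD M N (min (v / sqrt (gam m a b x1)) V) x1\<bar> \<le> R"
        proof
          fix x1 assume x1: "x1 \<in> Jprime m a b \<epsilon>"
          then have gx: "\<epsilon> / 2 \<le> gam m a b x1" unfolding Jprime_def Jeps_def by auto
          define y where "y = min (v / sqrt (gam m a b x1)) V"
          have y: "0 < y" using gx e v vV by (simp add: y_def)
          have yV: "y \<le> V" by (simp add: y_def)
          define f where "f u = ennreal (cmod (stieltjes M (Complex x1 u) - stieltjes N (Complex x1 u)))" for u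
          have "(\<integral>\<^sup>+ u. f u * indicator {y..V} u \<partial>lborel) \<le> (\<integral>\<^sup>+ u. f u * indicator {v / sqrt (gam m a b x1)..V} u \<partial>lborel)"
          proof (cases "v / sqrt (gam m a b x1) \<le> V")
            case True
            then show ?thesis by (simp add: y_def)
          next
            case False
            then have yV': "y = V" by (simp add: y_def)
            have "AE u in lborel. f u * indicator {y..V} u = 0"
              using AE_lborel_singleton[of V] by eventually_elim (use yV' in \<open>auto split: split_indicator\<close>)
            from nn_integral_cong_AE[OF this] show ?thesis by simp
          qed
          also have "\<dots> \<le> Bs" unfolding Bs_def f_def by (rule SUP_upper[OF x1])
          finally have fB: "(\<integral>\<^sup>+ u. f u * indicator {y..V} u \<partial>lborel) \<le> Bs" .
          have "ennreal \<bar>PD M N y x1\<bar> \<le> ennreal (1 / pi) * (A + (\<integral>\<^sup>+ u. f u * indicator {y..V} u \<partial>lborel))"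
            unfolding PD_def A_def f_def by (rule PD_bound[OF M N_distr y yV])
          also have "\<dots> \<le> ennreal (1 / pi) * (A + Bs)" by (intro mult_left_mono add_left_mono fB) auto
          also have "\<dots> = ennreal R"
          proof -
            define S where "S = enn2real A + enn2real Bs"
            have eq: "A + Bs = ennreal S" unfolding S_def using Af Bf by (subst ennreal_plus) (auto simp: ennreal_enn2real_if)
            have "ennreal (1 / pi) * ennreal S = ennreal (1 / pi * S)" by (rule ennreal_mult[symmetric]) (auto simp: S_def)
            moreover have "1 / pi * S = R" unfolding R_def S_def by simp
            ultimately show ?thesis by (simp only: eq)
          qed
          finally show "\<bar>PD M N (min (v / sqrt (gam m a b x1)) V) x1\<bar> \<le> R"
            using R0 unfolding y_def by simp
        qed
        interpret GS2 N g m a b M v \<epsilon> V C R D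
          by (rule GS2.intro[OF GSh GS2_axioms.intro]) (use M v e small hv vV C0 gC R0 PDR Dd in auto)
        have "D \<le> 8 * C * v + 12 * C * (\<epsilon> * sqrt \<epsilon>) + (3 * R + D) / 2"
          unfolding D_def by (rule cSUP_least) (auto intro: point[unfolded D_def])
        then have "D \<le> 16 * C * v + 24 * C * (\<epsilon> * sqrt \<epsilon>) + 3 * R" by (simp add: field_simps)
        also have "3 * R \<le> enn2real A + enn2real Bs"
        proof -
          have "3 * R = (enn2real A + enn2real Bs) * (3 / pi)" by (simp add: R_def)
          also have "\<dots> \<le> (enn2real A + enn2real Bs) * 1"
            using pi_gt3 by (intro mult_left_mono) auto
          finally show ?thesis by simp
        qed
        also have "16 * C * v \<le> C1 * v" using v by (intro mult_right_mono) (auto simp: C1_def)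
        also have "24 * C * (\<epsilon> * sqrt \<epsilon>) \<le> C2 * (\<epsilon> * sqrt \<epsilon>)" using e by (intro mult_right_mono) (auto simp: C2_def)
        finally have Dle: "D \<le> 2 * enn2real A + C1 * v + C2 * \<epsilon> powr (3/2) + 2 * enn2real Bs"
          unfolding e32 using enn2real_nonneg[of A] enn2real_nonneg[of Bs] by linarith
        have "ennreal D \<le> ennreal (2 * enn2real A + C1 * v + C2 * \<epsilon> powr (3/2) + 2 * enn2real Bs)"
          by (rule ennreal_leI[OF Dle])
        also have "\<dots> = 2 * A + ennreal (C1 * v) + ennreal (C2 * \<epsilon> powr (3/2)) + 2 * Bs"
          using Af Bf C1pos C2pos v e
          by (simp add: ennreal_mult ennreal_enn2real_if ennreal_plus)
        finally show ?thesis .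
      qed
    qed
    show "ennreal (SUP x. \<bar>cdf M x - cdf N x\<bar>)
        \<le> 2 * (\<integral>\<^sup>+ u. ennreal (cmod (stieltjes M (Complex u V) - stieltjes N (Complex u V))) \<partial>lborel)
          + ennreal (C1 * v) + ennreal (C2 * \<epsilon> powr (3/2))
          + 2 * (SUP x\<in>Jprime m a b \<epsilon>.
                 \<integral>\<^sup>+ u. ennreal (cmod (stieltjes M (Complex x u) - stieltjes N (Complex x u)))
                        * indicator {v / sqrt (gam m a b x)..V} u \<partial>lborel)"
      by (rule main[unfolded D_def A_def Bs_def])
  qed
qed


end
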